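(* Let $1<p<\infty$, $r\in[1,\infty]$, $a\colon\mathbb{R}^d \to \mathbb{C}$ a homogeneous strongly elliptic polynomial in $\mathbb{R}^d$ of degree $m\geq 2$, $A_p$ the associated elliptic operator in $L_p(\mathbb{R}^d)$, $(S_t)_{t\geq 0}$ the bounded $C_0$-semigroup on $L_p (\mathbb{R}^d)$ generated by $-A_p$, $E\subset \mathbb{R}^d$ measurable, and $T > 0$. Assume there exists $C_{\mathrm{obs}}>0$ such that for all $x_0 \in L_p (\mathbb{R}^d)$ \[ \lVert S_T x_0 \rVert_{L_p(\mathbb{R}^d)} \leq C_{\mathrm{obs}} \lVert \mathbf{1}_E S_{(\cdot)} x_0 \rVert_{L_r ((0,T);L_p(E) )}. \] Then $E$ is a thick set.
   Context: Fourier transform on the Schwartz space $\mathcal{S}(\mathbb{R}^d)$: $\mathcal{F} f (\xi) = (2\pi)^{-d/2}\int_{\mathbb{R}^d} f(x) e^{-i\xi\cdot x}\,dx$. A homogeneous strongly elliptic polynomial of degree $m\ge 2$ is $a (\xi) = \sum_{\lvert \alpha \rvert_1 = m} a_\alpha i^{\lvert \alpha \rvert_1} \xi^\alpha$ with $a_\alpha\in\mathbb{C}$ such that there is $c>0$ with $\operatorname{Re} a (\xi) \geq c \lvert \xi \rvert^m$ for all $\xi$. For $f\in \mathcal{S}(\mathbb{R}^d)$ set $Af = \mathcal{F}^{-1} (a \mathcal{F} f)=\sum_{\lvert \alpha \rvert_1 =m} a_\alpha \partial^\alpha f$; the associated elliptic operator $A_p$ is the closure of $A$ in $L_p(\mathbb{R}^d)$,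 and $-A_p$ generates a bounded $C_0$-semigroup. A set $E\subset\mathbb{R}^d$ is thick if it is measurable and there exist $\rho\in(0,1)$ and $L\in(0,\infty)^d$ with $\lvert E \cap ( \prod_{i=1}^d (0,L_i) + x ) \rvert \geq \rho \prod_{i=1}^d L_i$ for all $x\in\mathbb{R}^d$ ($\lvert\cdot\rvert$ Lebesgue measure). $\mathbf{1}_E\colon L_p(\mathbb{R}^d)\to L_p(E)$ is restriction to $E$; for $r=\infty$ the $L_r$-norm in time is the essential supremum. *)

theory Defs
  imports "HOL-Analysis.Analysis" "HOL-Probability.Essential_Supremum"
begin

text \<open>Dimension d is CARD('n); R^d is real^'n. Functions are complex valued.\<close>

definition fourier :: "(real^'n \<Rightarrow> complex) \<Rightarrow> real^'n \<Rightarrow> complex" where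
  "fourier f \<xi> = complex_of_real ((2 * pi) powr (- real CARD('n) / 2)) *
     (\<integral>x. f x * exp (- \<i> * complex_of_real (\<xi> \<bullet> x)) \<partial>lborel)"

definition fourier_inv :: "(real^'n \<Rightarrow> complex) \<Rightarrow> real^'n \<Rightarrow> complex" where
  "fourier_inv g x = complex_of_real ((2 * pi) powr (- real CARD('n) / 2)) *
     (\<integral>\<xi>. g \<xi> * exp (\<i> * complex_of_real (\<xi> \<bullet> x)) \<partial>lborel)"

definition pderiv_dir :: "'n \<Rightarrow> (real^'n \<Rightarrow> complex) \<Rightarrow> real^'n \<Rightarrow> complex" where
  "pderiv_dir i f x = vector_derivative (\<lambda>t. f (x + t *\<^sub>R axis i 1)) (at 0)"

fun iter_pderiv :: "'n list \<Rightarrow> (real^'n \<Rightarrow> complex) \<Rightarrow> real^'n \<Rightarrow> complex" where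
  "iter_pderiv [] f = f"
| "iter_pderiv (i # is) f = pderiv_dir i (iter_pderiv is f)"

definition schwartz :: "(real^'n \<Rightarrow> complex) \<Rightarrow> bool" where
  "schwartz f \<longleftrightarrow>
     (\<forall>is x i. (\<lambda>t. iter_pderiv is f (x + t *\<^sub>R axis i 1)) differentiable (at 0)) \<and>
     (\<forall>is (\<beta>::'n \<Rightarrow> nat). bounded (range (\<lambda>x.
         complex_of_real (\<Prod>i\<in>UNIV. (x $ i) ^ \<beta> i) * iter_pderiv is f x)))"

definition hom_symbol :: "nat \<Rightarrow> (('n::finite \<Rightarrow> nat) \<Rightarrow> complex) \<Rightarrow> real^'n \<Rightarrow> complex" where
  "hom_symbol m c \<xi> = (\<Sum>\<alpha>\<in>{\<alpha>::'n \<Rightarrow> nat. (\<Sum>i\<in>UNIV. \<alpha> i) = m}.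
      c \<alpha> * \<i> ^ m * (\<Prod>i\<in>UNIV. complex_of_real (\<xi> $ i) ^ \<alpha> i))"

definition strongly_elliptic :: "nat \<Rightarrow> (('n::finite \<Rightarrow> nat) \<Rightarrow> complex) \<Rightarrow> bool" where
  "strongly_elliptic m c \<longleftrightarrow>
     (\<exists>k>0. \<forall>\<xi>::real^'n. Re (hom_symbol m c \<xi>) \<ge> k * norm \<xi> ^ m)"

definition in_Lp :: "real \<Rightarrow> (real^'n \<Rightarrow> complex) \<Rightarrow> bool" where
  "in_Lp p f \<longleftrightarrow> f \<in> borel_measurable lebesgue \<and>
      integrable lebesgue (\<lambda>x. norm (f x) powr p)"

definition Lp_norm :: "real \<Rightarrow> (real^'n \<Rightarrow> complex) \<Rightarrow> real" where
  "Lp_norm p f = (\<integral>x. norm (f x) powr p \<partial>lebesgue) powr (1 / p)"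

definition Lp_norm_on :: "real \<Rightarrow> (real^'n) set \<Rightarrow> (real^'n \<Rightarrow> complex) \<Rightarrow> real" where
  "Lp_norm_on p E f = (\<integral>x\<in>E. norm (f x) powr p \<partial>lebesgue) powr (1 / p)"

definition Lr_time_norm :: "ereal \<Rightarrow> real \<Rightarrow> (real \<Rightarrow> real) \<Rightarrow> real" where
  "Lr_time_norm r T g =
     (if r = \<infinity> then real_of_ereal (esssup (restrict_space lborel {0<..<T}) (\<lambda>t. ereal (g t)))
      else (\<integral>t\<in>{0<..<T}. g t powr real_of_ereal r \<partial>lborel) powr (1 / real_of_ereal r))"

text \<open>The semigroup (S_t) generated by -A_p: for each t \<ge> 0, S_t maps L_p into L_p,
  is bounded (Lipschitz) w.r.t. the L_p norm, and on Schwartz functions acts as the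
  Fourier multiplier exp(-t a). By density of the Schwartz space in L_p (p < \<infinity>),
  this determines S_t on L_p uniquely (up to a.e. equality).\<close>
definition is_elliptic_semigroup ::
  "real \<Rightarrow> (real^'n \<Rightarrow> complex) \<Rightarrow> (real \<Rightarrow> (real^'n \<Rightarrow> complex) \<Rightarrow> real^'n \<Rightarrow> complex) \<Rightarrow> bool" where
  "is_elliptic_semigroup p a S \<longleftrightarrow>
     (\<forall>t\<ge>0.
        (\<forall>f. in_Lp p f \<longrightarrow> in_Lp p (S t f)) \<and>
        (\<exists>M. \<forall>f g. in_Lp p f \<longrightarrow> in_Lp p g \<longrightarrow>
              Lp_norm p (\<lambda>x. S t f x - S t g x) \<le> M * Lp_norm p (\<lambda>x. f x - g x)) \<and>
        (\<forall>f. schwartz f \<longrightarrow>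
              S t f = fourier_inv (\<lambda>\<xi>. exp (- complex_of_real t * a \<xi>) * fourier f \<xi>)))"

definition thick :: "(real^'n) set \<Rightarrow> bool" where
  "thick E \<longleftrightarrow> E \<in> sets lebesgue \<and>
     (\<exists>\<rho> L. 0 < \<rho> \<and> \<rho> < 1 \<and> (\<forall>i. 0 < L $ i) \<and>
        (\<forall>x. measure lebesgue (E \<inter> box x (x + L)) \<ge> \<rho> * (\<Prod>i\<in>UNIV. L $ i)))"

end

theory Submission
  imports Defs "HOL-Probability.Probability"
begin
inductive pfun :: "('a::real_inner \<Rightarrow> complex) \<Rightarrow> bool" where
  pconst: "pfun (\<lambda>x. c)"
| plin: "pfun (\<lambda>x. complex_of_real (x \<bullet> b))"
| padd: "pfun P \<Longrightarrow> pfun Q \<Longrightarrow> pfun (\<lambda>x. P x + Q x)"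
| pmul: "pfun P \<Longrightarrow> pfun Q \<Longrightarrow> pfun (\<lambda>x. P x * Q x)"

lemma pfun_sum: "finite A \<Longrightarrow> (\<And>i. i \<in> A \<Longrightarrow> pfun (P i)) \<Longrightarrow> pfun (\<lambda>x. \<Sum>i\<in>A. P i x)"
  by (induction A rule: finite_induct) (auto intro: pfun.intros)

lemma pfun_prod: "finite A \<Longrightarrow> (\<And>i. i \<in> A \<Longrightarrow> pfun (P i)) \<Longrightarrow> pfun (\<lambda>x. \<Prod>i\<in>A. P i x)"
  by (induction A rule: finite_induct) (auto intro: pfun.intros)

lemma pfun_power: "pfun P \<Longrightarrow> pfun (\<lambda>x. P x ^ n)"
  by (induction n) (auto intro: pfun.intros)

lemma pfun_minus: "pfun P \<Longrightarrow> pfun Q \<Longrightarrow> pfun (\<lambda>x. P x - Q x)"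
proof -
  assume "pfun P" "pfun Q"
  then have "pfun (\<lambda>x. P x + (-1) * Q x)" by (intro pfun.intros)
  then show ?thesis by simp
qed

lemma pfun_deriv:
  assumes "pfun P"
  shows "\<exists>P'. pfun P' \<and> (\<forall>z s. ((\<lambda>s. P (z + s *\<^sub>R v)) has_vector_derivative P' (z + s *\<^sub>R v)) (at s))"
  using assms
proof induction
  case (pconst c)
  then show ?case by (intro exI[of _ "\<lambda>x. 0"]) (auto intro: pfun.intros derivative_eq_intros)
next
  case (plin b)
  have "((\<lambda>s. complex_of_real ((z + s *\<^sub>R v) \<bullet> b)) has_vector_derivative complex_of_real (v \<bullet> b)) (at s)" for z s
  proof -
    have "((\<lambda>s. (z + s *\<^sub>R v) \<bullet> b) has_real_derivative (v \<bullet> b)) (at s)"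
      by (auto intro!: derivative_eq_intros simp: inner_add_left)
    then show ?thesis by (rule has_vector_derivative_of_real)
  qed
  then show ?case by (intro exI[of _ "\<lambda>x. complex_of_real (v \<bullet> b)"]) (auto intro: pfun.intros)
next
  case (padd P Q)
  then obtain P' Q' where "pfun P'" "pfun Q'"
    and dP: "\<And>z s. ((\<lambda>s. P (z + s *\<^sub>R v)) has_vector_derivative P' (z + s *\<^sub>R v)) (at s)"
    and dQ: "\<And>z s. ((\<lambda>s. Q (z + s *\<^sub>R v)) has_vector_derivative Q' (z + s *\<^sub>R v)) (at s)" by blast
  show ?case
    by (intro exI[of _ "\<lambda>x. P' x + Q' x"] conjI allI pfun.intros \<open>pfun P'\<close> \<open>pfun Q'\<close>
        has_vector_derivative_add dP dQ)
next
  case (pmul P Q)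
  then obtain P' Q' where "pfun P'" "pfun Q'"
    and dP: "\<And>z s. ((\<lambda>s. P (z + s *\<^sub>R v)) has_vector_derivative P' (z + s *\<^sub>R v)) (at s)"
    and dQ: "\<And>z s. ((\<lambda>s. Q (z + s *\<^sub>R v)) has_vector_derivative Q' (z + s *\<^sub>R v)) (at s)" by blast
  have "((\<lambda>s. P (z + s *\<^sub>R v) * Q (z + s *\<^sub>R v)) has_vector_derivative
      P (z + s *\<^sub>R v) * Q' (z + s *\<^sub>R v) + P' (z + s *\<^sub>R v) * Q (z + s *\<^sub>R v)) (at s)" for z s
    by (rule has_vector_derivative_mult[OF dP dQ])
  then show ?case
    by (intro exI[of _ "\<lambda>x. P x * Q' x + P' x * Q x"] conjI allI pfun.intros \<open>pfun P'\<close> \<open>pfun Q'\<close> pmul.hyps) auto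
qed


lemma vd_exp:
  assumes "(q has_vector_derivative q') (at s)"
  shows "((\<lambda>s. exp (q s :: complex)) has_vector_derivative q' * exp (q s)) (at s)"
proof -
  have "((exp \<circ> q) has_vector_derivative q' * exp (q s)) (at s)"
    by (rule field_vector_diff_chain_at[OF assms]) (rule DERIV_exp)
  then show ?thesis by (simp add: comp_def)
qed

lemma pfun_exp_deriv:
  assumes "pfun P" "pfun Q"
  shows "\<exists>P'. pfun P' \<and> (\<forall>z s. ((\<lambda>s. P (z + s *\<^sub>R v) * exp (Q (z + s *\<^sub>R v)))
     has_vector_derivative P' (z + s *\<^sub>R v) * exp (Q (z + s *\<^sub>R v))) (at s))"
proof -
  obtain P' where P': "pfun P'" "\<And>z s. ((\<lambda>s. P (z + s *\<^sub>R v)) has_vector_derivative P' (z + s *\<^sub>R v)) (at s)"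
    using pfun_deriv[OF assms(1), of v] by blast
  obtain Q' where Q': "pfun Q'" "\<And>z s. ((\<lambda>s. Q (z + s *\<^sub>R v)) has_vector_derivative Q' (z + s *\<^sub>R v)) (at s)"
    using pfun_deriv[OF assms(2), of v] by blast
  have "((\<lambda>s. P (z + s *\<^sub>R v) * exp (Q (z + s *\<^sub>R v))) has_vector_derivative
     P (z + s *\<^sub>R v) * (Q' (z + s *\<^sub>R v) * exp (Q (z + s *\<^sub>R v))) + P' (z + s *\<^sub>R v) * exp (Q (z + s *\<^sub>R v))) (at s)" for z s
    by (intro has_vector_derivative_mult P' vd_exp Q')
  then show ?thesis
    by (intro exI[of _ "\<lambda>x. P x * Q' x + P' x"] conjI allI pfun.intros P' Q' assms)
       (auto simp: algebra_simps)
qed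

lemma pfun_bound:
  assumes "pfun P"
  shows "\<exists>C k. 0 \<le> C \<and> (\<forall>x. cmod (P x) \<le> C * (1 + norm x ^ 2) ^ k)"
  using assms
proof induction
  case (pconst c)
  then show ?case by (intro exI[of _ "cmod c"] exI[of _ 0]) auto
next
  case (plin b)
  have "cmod (complex_of_real (x \<bullet> b)) \<le> norm b * (1 + norm x ^ 2) ^ 1" for x
  proof -
    have "\<bar>x \<bullet> b\<bar> \<le> norm x * norm b" by (simp add: Cauchy_Schwarz_ineq2)
    also have "norm x \<le> 1 + norm x ^ 2"
    proof -
      have "2 * norm x \<le> 1 + norm x ^ 2"
        using sum_squares_ge_zero[of "norm x - 1" 0] by (simp add: power2_eq_square algebra_simps)
      then show ?thesis using norm_ge_zero[of x] by linarith
    qed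
    then have "norm x * norm b \<le> norm b * (1 + norm x ^ 2)" by (simp add: mult.commute mult_left_mono)
    finally show ?thesis by simp
  qed
  then show ?case by (intro exI[of _ "norm b"] exI[of _ 1]) auto
next
  case (padd P Q)
  then obtain C1 k1 C2 k2 where h: "0 \<le> C1" "\<And>x. cmod (P x) \<le> C1 * (1 + norm x ^ 2) ^ k1"
    "0 \<le> C2" "\<And>x. cmod (Q x) \<le> C2 * (1 + norm x ^ 2) ^ k2" by blast
  have "cmod (P x + Q x) \<le> (C1 + C2) * (1 + norm x ^ 2) ^ (k1 + k2)" for x
  proof -
    have b1: "(1 + norm x ^ 2) ^ k1 \<le> (1 + norm x ^ 2) ^ (k1 + k2)"
      by (intro power_increasing) auto
    have b2: "(1 + norm x ^ 2) ^ k2 \<le> (1 + norm x ^ 2) ^ (k1 + k2)"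
      by (intro power_increasing) auto
    have "cmod (P x + Q x) \<le> cmod (P x) + cmod (Q x)" by (rule norm_triangle_ineq)
    also have "\<dots> \<le> C1 * (1 + norm x ^ 2) ^ (k1 + k2) + C2 * (1 + norm x ^ 2) ^ (k1 + k2)"
      using h(2)[of x] h(4)[of x] mult_left_mono[OF b1 h(1)] mult_left_mono[OF b2 h(3)] by linarith
    finally show ?thesis by (simp add: algebra_simps)
  qed
  then show ?case using h by (intro exI[of _ "C1 + C2"] exI[of _ "k1 + k2"]) auto
next
  case (pmul P Q)
  then obtain C1 k1 C2 k2 where h: "0 \<le> C1" "\<And>x. cmod (P x) \<le> C1 * (1 + norm x ^ 2) ^ k1"
    "0 \<le> C2" "\<And>x. cmod (Q x) \<le> C2 * (1 + norm x ^ 2) ^ k2" by blast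
  have "cmod (P x * Q x) \<le> (C1 * C2) * (1 + norm x ^ 2) ^ (k1 + k2)" for x
  proof -
    have "cmod (P x * Q x) = cmod (P x) * cmod (Q x)" by (simp add: norm_mult)
    also have "\<dots> \<le> (C1 * (1 + norm x ^ 2) ^ k1) * (C2 * (1 + norm x ^ 2) ^ k2)"
      by (intro mult_mono h) (auto intro!: mult_nonneg_nonneg h)
    finally show ?thesis by (simp add: power_add algebra_simps)
  qed
  then show ?case using h by (intro exI[of _ "C1 * C2"] exI[of _ "k1 + k2"]) auto
qed

lemma poly_exp_bound:
  fixes c :: real
  assumes "c > 0"
  shows "\<exists>M. \<forall>s\<ge>0. (1 + s) ^ k * exp (- c * s) \<le> M"
proof (cases "k = 0")
  case True
  then show ?thesis using assms by (intro exI[of _ 1]) auto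
next
  case False
  define A where "A = max 1 (2 * real k / c)"
  have A: "A \<ge> 1" "A \<ge> 2 * real k / c" by (auto simp: A_def)
  have "(1 + s) ^ k * exp (- c * s) \<le> A ^ k" if "s \<ge> 0" for s
  proof -
    have "1 + s \<le> A * (1 + c * s / (2 * k))"
    proof -
      have "s \<le> A * (c * s / (2 * k))"
      proof -
        have "A * (c * s / (2 * k)) = (A * c / (2 * k)) * s" by simp
        moreover have "A * c / (2 * k) \<ge> 1" using A(2) False assms
          by (simp add: field_simps)
        ultimately show ?thesis using that mult_right_mono[of 1 "A * c / (2 * k)" s] by simp
      qed
      then show ?thesis using A(1) by (simp add: distrib_left)
    qed
    then have "(1 + s) ^ k \<le> (A * (1 + c * s / (2 * k))) ^ k"
      by (intro power_mono) (use that in auto)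
    also have "\<dots> = A ^ k * (1 + c * s / (2 * k)) ^ k" by (simp add: power_mult_distrib)
    also have "(1 + c * s / (2 * k)) ^ k \<le> exp (c * s / (2 * k)) ^ k"
      by (intro power_mono) (use that assms in \<open>auto simp: exp_ge_add_one_self\<close>)
    also have "exp (c * s / (2 * k)) ^ k = exp (c * s / 2)"
      using False by (simp add: exp_of_nat_mult[symmetric])
    finally have "(1 + s) ^ k \<le> A ^ k * exp (c * s / 2)"
      using A by (simp add: mult_left_mono)
    then have "(1 + s) ^ k * exp (- c * s) \<le> A ^ k * exp (c * s / 2) * exp (- c * s)"
      by (simp add: mult_right_mono)
    also have "\<dots> = A ^ k * exp (- c * s / 2)" by (simp add: mult.assoc exp_add[symmetric])
    also have "\<dots> \<le> A ^ k" using that assms A by simp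
    finally show ?thesis .
  qed
  then show ?thesis by blast
qed

lemma pfun_normsq: "pfun (\<lambda>x::'a::euclidean_space. complex_of_real (norm (x - y) ^ 2))"
proof -
  have eq: "complex_of_real (norm (x - y) ^ 2) = (\<Sum>b\<in>Basis. (complex_of_real (x \<bullet> b) - complex_of_real (y \<bullet> b)) ^ 2)" for x
  proof -
    have "norm (x - y) ^ 2 = (\<Sum>b\<in>Basis. ((x - y) \<bullet> b) ^ 2)"
      by (subst power2_norm_eq_inner, subst euclidean_inner) (simp add: power2_eq_square)
    then show ?thesis by (simp add: inner_diff_left)
  qed
  show ?thesis unfolding eq
    by (intro pfun_sum pfun_power pfun_minus pfun.intros) auto
qed

definition gauss :: "real \<Rightarrow> 'a::euclidean_space \<Rightarrow> 'a \<Rightarrow> complex" where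
  "gauss l y x = exp (complex_of_real (- (norm (x - y) ^ 2) / (2 * l ^ 2)))"

lemma pfun_gq: "pfun (\<lambda>x::'a::euclidean_space. complex_of_real (- (norm (x - y) ^ 2) / (2 * l ^ 2)))"
proof -
  have "pfun (\<lambda>x::'a. complex_of_real (- 1 / (2 * l ^ 2)) * complex_of_real (norm (x - y) ^ 2))"
    by (intro pfun.intros pfun_normsq)
  then show ?thesis by (simp add: field_simps)
qed

lemma iter_pderiv_pexp:
  assumes "pfun P" "pfun Q"
  shows "\<exists>P'. pfun P' \<and> iter_pderiv is (\<lambda>x. P x * exp (Q x)) = (\<lambda>x. P' x * exp (Q x))"
proof (induction "is")
  case Nil
  then show ?case using assms by auto
next
  case (Cons i "is")
  then obtain P1 where P1: "pfun P1" "iter_pderiv is (\<lambda>x. P x * exp (Q x)) = (\<lambda>x. P1 x * exp (Q x))" by blast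
  obtain P2 where P2: "pfun P2" "\<And>z s. ((\<lambda>s. P1 (z + s *\<^sub>R axis i 1) * exp (Q (z + s *\<^sub>R axis i 1)))
     has_vector_derivative P2 (z + s *\<^sub>R axis i 1) * exp (Q (z + s *\<^sub>R axis i 1))) (at s)"
    using pfun_exp_deriv[OF P1(1) assms(2), of "axis i 1"] by blast
  have "pderiv_dir i (\<lambda>x. P1 x * exp (Q x)) = (\<lambda>x. P2 x * exp (Q x))"
  proof
    fix x
    show "pderiv_dir i (\<lambda>x. P1 x * exp (Q x)) x = P2 x * exp (Q x)"
      unfolding pderiv_dir_def using vector_derivative_at[OF P2(2)[of x 0]] by simp
  qed
  then show ?case using P1 P2 by auto
qed

lemma bounded_pexp:
  fixes y :: "'a::euclidean_space"
  assumes "pfun R" "c > 0" "\<And>x. Re (Q x) \<le> - c * norm (x - y) ^ 2"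
  shows "bounded (range (\<lambda>x. R x * exp (Q x)))"
proof -
  obtain C k where Ck: "0 \<le> C" "\<And>x. cmod (R x) \<le> C * (1 + norm x ^ 2) ^ k"
    using pfun_bound[OF assms(1)] by blast
  obtain M where M: "\<And>s. s \<ge> 0 \<Longrightarrow> (1 + s) ^ k * exp (- (c/2) * s) \<le> M"
    using poly_exp_bound[of "c/2" k] assms(2) by auto
  have "cmod (R x * exp (Q x)) \<le> C * (2 * (1 + norm y ^ 2)) ^ k * M" for x
  proof -
    have n1: "norm x ^ 2 \<le> 2 * norm (x - y) ^ 2 + 2 * norm y ^ 2"
    proof -
      have "norm x \<le> norm (x - y) + norm y" by (metis norm_triangle_sub add.commute)
      then have "norm x ^ 2 \<le> (norm (x - y) + norm y) ^ 2" by (simp add: power_mono)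
      also have "\<dots> \<le> 2 * norm (x - y) ^ 2 + 2 * norm y ^ 2"
        using sum_squares_ge_zero[of "norm (x-y) - norm y" 0] by (simp add: power2_eq_square algebra_simps)
      finally show ?thesis .
    qed
    have n2: "1 + norm x ^ 2 \<le> (2 * (1 + norm y ^ 2)) * (1 + norm (x - y) ^ 2)"
      using n1 by (simp add: algebra_simps) (smt (verit) mult_nonneg_nonneg zero_le_power2)
    have "cmod (R x * exp (Q x)) = cmod (R x) * exp (Re (Q x))" by (simp add: norm_mult)
    also have "\<dots> \<le> C * (1 + norm x ^ 2) ^ k * exp (- c * norm (x - y) ^ 2)"
      by (intro mult_mono Ck) (use assms(3) Ck(1) in auto)
    also have "\<dots> \<le> C * ((2 * (1 + norm y ^ 2)) * (1 + norm (x - y) ^ 2)) ^ k * exp (- c * norm (x - y) ^ 2)"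
      by (intro mult_right_mono mult_left_mono power_mono n2 Ck) auto
    also have "\<dots> = C * (2 * (1 + norm y ^ 2)) ^ k * ((1 + norm (x - y) ^ 2) ^ k * exp (- c * norm (x - y) ^ 2))"
      by (simp add: power_mult_distrib)
    also have "(1 + norm (x - y) ^ 2) ^ k * exp (- c * norm (x - y) ^ 2) \<le> (1 + norm (x - y) ^ 2) ^ k * exp (- (c/2) * norm (x - y) ^ 2)"
      using assms(2) by (intro mult_left_mono) auto
    also have "\<dots> \<le> M" by (rule M) simp
    finally show ?thesis using Ck(1) by (simp add: mult_left_mono)
  qed
  then show ?thesis by (intro boundedI) auto
qed

lemma schwartz_gauss:
  assumes "l > 0"
  shows "schwartz (gauss l (y::real^'n))"
proof -
  let ?Q = "\<lambda>x::real^'n. complex_of_real (- (norm (x - y) ^ 2) / (2 * l ^ 2))"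
  have g: "gauss l y = (\<lambda>x. 1 * exp (?Q x))" by (simp add: gauss_def[abs_def])
  have one: "pfun (\<lambda>x::real^'n. 1)" by (rule pconst)
  show ?thesis unfolding schwartz_def
  proof (intro conjI allI)
    fix "is" x i
    obtain P' where P': "pfun P'" "iter_pderiv is (gauss l y) = (\<lambda>x. P' x * exp (?Q x))"
      using iter_pderiv_pexp[OF one pfun_gq, of "is" y l] g by auto
    obtain P2 where "((\<lambda>s. P' (x + s *\<^sub>R axis i 1) * exp (?Q (x + s *\<^sub>R axis i 1)))
       has_vector_derivative P2 (x + 0 *\<^sub>R axis i 1) * exp (?Q (x + 0 *\<^sub>R axis i 1))) (at 0)"
      using pfun_exp_deriv[OF P'(1) pfun_gq, of "axis i 1" y l] by blast
    then show "(\<lambda>t. iter_pderiv is (gauss l y) (x + t *\<^sub>R axis i 1)) differentiable at 0"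
      unfolding P'(2) by (rule differentiableI_vector)
  next
    fix "is" and \<beta> :: "'n \<Rightarrow> nat"
    obtain P' where P': "pfun P'" "iter_pderiv is (gauss l y) = (\<lambda>x. P' x * exp (?Q x))"
      using iter_pderiv_pexp[OF one pfun_gq, of "is" y l] g by auto
    have pr: "pfun (\<lambda>x::real^'n. complex_of_real (\<Prod>i\<in>UNIV. (x $ i) ^ \<beta> i) * P' x)"
    proof -
      have "pfun (\<lambda>x::real^'n. (\<Prod>i\<in>UNIV. complex_of_real (x \<bullet> axis i 1) ^ \<beta> i) * P' x)"
        by (intro pfun.intros pfun_prod pfun_power P') auto
      then show ?thesis by (simp add: inner_axis)
    qed
    have "bounded (range (\<lambda>x. (complex_of_real (\<Prod>i\<in>UNIV. (x $ i) ^ \<beta> i) * P' x) * exp (?Q x)))"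
      by (rule bounded_pexp[OF pr, of "1 / (2 * l^2)" _ y]) (use assms in auto)
    then show "bounded (range (\<lambda>x. complex_of_real (\<Prod>i\<in>UNIV. (x $ i) ^ \<beta> i) * iter_pderiv is (gauss l y) x))"
      unfolding P'(2) by (simp add: mult.assoc)
  qed
qed

lemma integral_lborel_prod:
  fixes f :: "'a::euclidean_space \<Rightarrow> real \<Rightarrow> 'b::{real_normed_field,banach,second_countable_topology}"
  assumes int: "\<And>b. b \<in> Basis \<Longrightarrow> integrable lborel (f b)"
  shows "integrable lborel (\<lambda>x::'a. \<Prod>b\<in>Basis. f b (x \<bullet> b))"
    "(\<integral>x. (\<Prod>b\<in>Basis. f b (x \<bullet> b)) \<partial>lborel) = (\<Prod>b\<in>Basis. (\<integral>x. f b x \<partial>lborel))"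
proof -
  interpret finite_product_sigma_finite "\<lambda>_. lborel" "Basis::'a set" by standard simp
  have m[measurable]: "(\<lambda>g. \<Sum>b\<in>Basis. g b *\<^sub>R b) \<in> (\<Pi>\<^sub>M b\<in>(Basis::'a set). lborel) \<rightarrow>\<^sub>M borel"
    by measurable
  have meas[measurable]: "\<And>b. b \<in> Basis \<Longrightarrow> f b \<in> borel_measurable borel"
    using borel_measurable_integrable[OF int] by simp
  have eq: "\<And>g. (\<Prod>b\<in>Basis. f b ((\<Sum>b'\<in>Basis. g b' *\<^sub>R b') \<bullet> b)) = (\<Prod>b\<in>(Basis::'a set). f b (g b))"
    by (intro prod.cong refl) (simp add: inner_sum_left inner_Basis if_distrib cong: if_cong)
  have pint: "integrable (\<Pi>\<^sub>M b\<in>(Basis::'a set). lborel) (\<lambda>g. \<Prod>b\<in>Basis. f b (g b))"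
    by (rule product_integrable_prod) (auto intro: int)
  show "integrable lborel (\<lambda>x::'a. \<Prod>b\<in>Basis. f b (x \<bullet> b))"
    apply (subst lborel_eq)
    apply (subst integrable_distr_eq)
      apply (rule m)
     apply measurable
    using pint by (simp add: eq)
  show "(\<integral>x. (\<Prod>b\<in>Basis. f b (x \<bullet> b)) \<partial>lborel) = (\<Prod>b\<in>Basis. (\<integral>x. f b x \<partial>lborel))"
    apply (subst lborel_eq)
    apply (subst integral_distr)
      apply (rule m)
     apply measurable
    apply (simp add: eq)
    by (rule product_integral_prod) (auto intro: int)
qed


lemma std_normal_char_int:
  "integrable lborel (\<lambda>s. std_normal_density s *\<^sub>R exp (\<i> * complex_of_real (t * s)))"
  "(\<integral>s. std_normal_density s *\<^sub>R exp (\<i> * complex_of_real (t * s)) \<partial>lborel) = complex_of_real (exp (- (t^2) / 2))"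
proof -
  show "integrable lborel (\<lambda>s. std_normal_density s *\<^sub>R exp (\<i> * complex_of_real (t * s)))"
    by (rule Bochner_Integration.integrable_bound[OF integrable_normal_density]) (auto simp: norm_mult)
  have "char std_normal_distribution t = complex_of_real (exp (- (t^2) / 2))"
    by (simp add: char_std_normal_distribution)
  then show "(\<integral>s. std_normal_density s *\<^sub>R exp (\<i> * complex_of_real (t * s)) \<partial>lborel) = complex_of_real (exp (- (t^2) / 2))"
    unfolding char_def by (subst (asm) integral_density) auto
qed

lemma gauss1d:
  fixes l a w :: real
  assumes "l > 0"
  defines "F \<equiv> (\<lambda>s. exp (complex_of_real (- ((s - a)^2) / (2 * l^2))) * exp (- \<i> * complex_of_real (w * s)))"
  shows "integrable lborel F"
    "(\<integral>s. F s \<partial>lborel) = complex_of_real (l * sqrt (2 * pi)) * exp (- \<i> * complex_of_real (w * a)) *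
        complex_of_real (exp (- (l^2 * w^2) / 2))"
proof -
  let ?c = "complex_of_real (sqrt (2 * pi)) * exp (- \<i> * complex_of_real (w * a))"
  have eq: "F (a + l * s) = ?c * (std_normal_density s *\<^sub>R exp (\<i> * complex_of_real ((- w * l) * s)))" for s
  proof -
    have "F (a + l * s) = exp (complex_of_real (- (s^2) / 2)) * exp (- \<i> * complex_of_real (w * a)) * exp (\<i> * complex_of_real ((- w * l) * s))"
      using assms(1) by (simp add: F_def power_mult_distrib exp_add[symmetric] algebra_simps)
    also have "exp (complex_of_real (- (s^2) / 2)) = complex_of_real (sqrt (2 * pi)) * complex_of_real (std_normal_density s)"
    proof -
      have "exp (complex_of_real (- (s^2) / 2)) = complex_of_real (exp (- (s^2) / 2))" by (rule exp_of_real)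
      also have "exp (- (s^2) / 2) = sqrt (2 * pi) * std_normal_density s"
        by (simp add: std_normal_density_def)
      finally show ?thesis by simp
    qed
    finally show ?thesis by (simp add: scaleR_conv_of_real algebra_simps)
  qed
  have i1: "integrable lborel (\<lambda>s. F (a + l * s))"
    unfolding eq by (intro integrable_mult_right std_normal_char_int)
  show "integrable lborel F"
    using i1 lborel_integrable_real_affine_iff[of l F a] assms(1) by simp
  have "(\<integral>s. F s \<partial>lborel) = \<bar>l\<bar> *\<^sub>R (\<integral>s. F (a + l * s) \<partial>lborel)"
    by (rule lborel_integral_real_affine) (use assms in simp)
  also have "(\<integral>s. F (a + l * s) \<partial>lborel) = ?c * (\<integral>s. std_normal_density s *\<^sub>R exp (\<i> * complex_of_real ((- w * l) * s)) \<partial>lborel)"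
    unfolding eq by (rule integral_mult_right_zero)
  also have "\<dots> = ?c * complex_of_real (exp (- ((- w * l)^2) / 2))"
    by (simp only: std_normal_char_int(2))
  finally show "(\<integral>s. F s \<partial>lborel) = complex_of_real (l * sqrt (2 * pi)) * exp (- \<i> * complex_of_real (w * a)) *
        complex_of_real (exp (- (l^2 * w^2) / 2))"
    using assms(1) by (simp add: scaleR_conv_of_real power_mult_distrib algebra_simps)
qed

lemma gauss_prod:
  fixes x y \<xi> :: "'a::euclidean_space"
  shows "gauss l y x * exp (- \<i> * complex_of_real (\<xi> \<bullet> x)) =
    (\<Prod>b\<in>Basis. exp (complex_of_real (- ((x \<bullet> b - y \<bullet> b)^2) / (2 * l^2))) * exp (- \<i> * complex_of_real ((\<xi> \<bullet> b) * (x \<bullet> b))))"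
proof -
  have n: "norm (x - y) ^ 2 = (\<Sum>b\<in>Basis. (x \<bullet> b - y \<bullet> b) ^ 2)"
    by (subst power2_norm_eq_inner, subst euclidean_inner) (simp add: power2_eq_square inner_diff_left)
  have i: "\<xi> \<bullet> x = (\<Sum>b\<in>Basis. (\<xi> \<bullet> b) * (x \<bullet> b))"
    by (subst euclidean_inner) simp
  have "gauss l y x = (\<Prod>b\<in>Basis. exp (complex_of_real (- ((x \<bullet> b - y \<bullet> b)^2) / (2 * l^2))))"
    unfolding gauss_def n by (simp add: exp_sum[symmetric] sum_divide_distrib sum_negf)
  moreover have "exp (- \<i> * complex_of_real (\<xi> \<bullet> x)) = (\<Prod>b\<in>Basis. exp (- \<i> * complex_of_real ((\<xi> \<bullet> b) * (x \<bullet> b))))"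
    unfolding i by (simp add: exp_sum[symmetric] sum_distrib_left)
  ultimately show ?thesis by (simp add: prod.distrib)
qed

lemma ft_gauss:
  fixes y \<xi> :: "'a::euclidean_space"
  assumes "l > 0"
  shows "integrable lborel (\<lambda>x. gauss l y x * exp (- \<i> * complex_of_real (\<xi> \<bullet> x)))"
    "(\<integral>x. gauss l y x * exp (- \<i> * complex_of_real (\<xi> \<bullet> x)) \<partial>lborel) =
      complex_of_real ((l * sqrt (2 * pi)) ^ DIM('a)) * exp (- \<i> * complex_of_real (\<xi> \<bullet> y)) *
      complex_of_real (exp (- (l^2 * norm \<xi> ^ 2) / 2))"
proof -
  define F where "F b s = exp (complex_of_real (- ((s - y \<bullet> b)^2) / (2 * l^2))) * exp (- \<i> * complex_of_real ((\<xi> \<bullet> b) * s))" for b s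
  have eq: "gauss l y x * exp (- \<i> * complex_of_real (\<xi> \<bullet> x)) = (\<Prod>b\<in>Basis. F b (x \<bullet> b))" for x
    unfolding gauss_prod F_def by simp
  have intF: "integrable lborel (F b)" for b
    unfolding F_def by (rule gauss1d(1)[OF assms])
  show "integrable lborel (\<lambda>x. gauss l y x * exp (- \<i> * complex_of_real (\<xi> \<bullet> x)))"
    unfolding eq by (rule integral_lborel_prod(1)) (rule intF)
  have "(\<integral>x. gauss l y x * exp (- \<i> * complex_of_real (\<xi> \<bullet> x)) \<partial>lborel) = (\<Prod>b\<in>Basis. (\<integral>s. F b s \<partial>lborel))"
    unfolding eq by (rule integral_lborel_prod(2)) (rule intF)
  also have "\<dots> = (\<Prod>b\<in>(Basis::'a set). complex_of_real (l * sqrt (2 * pi)) * exp (- \<i> * complex_of_real ((\<xi> \<bullet> b) * (y \<bullet> b))) *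
        complex_of_real (exp (- (l^2 * (\<xi> \<bullet> b)^2) / 2)))"
    unfolding F_def by (intro prod.cong refl gauss1d(2)[OF assms])
  also have "\<dots> = complex_of_real ((l * sqrt (2 * pi)) ^ DIM('a)) * exp (- \<i> * complex_of_real (\<xi> \<bullet> y)) *
      complex_of_real (exp (- (l^2 * norm \<xi> ^ 2) / 2))"
  proof -
    have n: "norm \<xi> ^ 2 = (\<Sum>b\<in>Basis. (\<xi> \<bullet> b) ^ 2)"
      by (subst power2_norm_eq_inner, subst euclidean_inner) (simp add: power2_eq_square)
    have i: "\<xi> \<bullet> y = (\<Sum>b\<in>Basis. (\<xi> \<bullet> b) * (y \<bullet> b))"
      by (subst euclidean_inner) simp
    have e1: "exp (- \<i> * complex_of_real (\<xi> \<bullet> y)) = (\<Prod>b\<in>(Basis::'a set). exp (- \<i> * complex_of_real ((\<xi> \<bullet> b) * (y \<bullet> b))))"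
      unfolding i by (simp add: exp_sum[symmetric] sum_distrib_left)
    have e2: "complex_of_real (exp (- (l^2 * norm \<xi> ^ 2) / 2)) = (\<Prod>b\<in>(Basis::'a set). complex_of_real (exp (- (l^2 * (\<xi> \<bullet> b)^2) / 2)))"
    proof -
      have "exp (- (l^2 * norm \<xi> ^ 2) / 2) = (\<Prod>b\<in>(Basis::'a set). exp (- (l^2 * (\<xi> \<bullet> b)^2) / 2))"
        unfolding n by (simp add: exp_sum[symmetric] sum_distrib_left sum_divide_distrib sum_negf)
      then show ?thesis by (simp add: of_real_prod)
    qed
    show ?thesis unfolding e1 e2 by (simp add: prod.distrib of_real_power)
  qed
  finally show "(\<integral>x. gauss l y x * exp (- \<i> * complex_of_real (\<xi> \<bullet> x)) \<partial>lborel) =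
      complex_of_real ((l * sqrt (2 * pi)) ^ DIM('a)) * exp (- \<i> * complex_of_real (\<xi> \<bullet> y)) *
      complex_of_real (exp (- (l^2 * norm \<xi> ^ 2) / 2))" .
qed

lemma fourier_gauss:
  fixes y \<xi> :: "real^'n"
  assumes "l > 0"
  shows "fourier (gauss l y) \<xi> = complex_of_real (l ^ CARD('n)) * exp (- \<i> * complex_of_real (\<xi> \<bullet> y)) *
      complex_of_real (exp (- (l^2 * norm \<xi> ^ 2) / 2))"
proof -
  have c: "(2 * pi) powr (- real CARD('n) / 2) * (l * sqrt (2 * pi)) ^ CARD('n) = l ^ CARD('n)"
  proof -
    have "sqrt (2 * pi) ^ CARD('n) = ((2 * pi) powr (1/2)) ^ CARD('n)"
      by (simp add: powr_half_sqrt)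
    also have "\<dots> = (2 * pi) powr (real CARD('n) / 2)"
      by (subst powr_power) auto
    finally have "sqrt (2 * pi) ^ CARD('n) = (2 * pi) powr (real CARD('n) / 2)" .
    then show ?thesis by (simp add: power_mult_distrib powr_minus field_simps)
  qed
  show ?thesis unfolding fourier_def ft_gauss(2)[OF assms]
  proof -
    have c': "complex_of_real ((2 * pi) powr (- real CARD('n) / 2)) * complex_of_real ((l * sqrt (2 * pi)) ^ CARD('n)) = complex_of_real (l ^ CARD('n))"
      using c by (metis of_real_mult)
    show "complex_of_real ((2 * pi) powr (- real CARD('n) / 2)) *
      (complex_of_real ((l * sqrt (2 * pi)) ^ DIM(real^'n)) * exp (- \<i> * complex_of_real (\<xi> \<bullet> y)) *
       complex_of_real (exp (- (l\<^sup>2 * (norm \<xi>)\<^sup>2) / 2))) =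
      complex_of_real (l ^ CARD('n)) * exp (- \<i> * complex_of_real (\<xi> \<bullet> y)) * complex_of_real (exp (- (l\<^sup>2 * (norm \<xi>)\<^sup>2) / 2))"
      using c' by (simp only: DIM_cart DIM_real mult_1_right mult.assoc[symmetric])
  qed
qed

lemma gauss_cont: "continuous_on UNIV (gauss l y)"
proof -
  have "gauss l y = (\<lambda>x. exp (complex_of_real ((- 1 / (2 * l^2)) * norm (x - y) ^ 2)))"
    by (auto simp: gauss_def fun_eq_iff)
  moreover have "continuous_on UNIV (\<lambda>x. exp (complex_of_real ((- 1 / (2 * l^2)) * norm (x - y) ^ 2)))"
    by (intro continuous_intros)
  ultimately show ?thesis by simp
qed

lemma gauss_meas[measurable]: "gauss l y \<in> borel_measurable borel"
  by (rule borel_measurable_continuous_onI[OF gauss_cont])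

lemma norm_gauss: "cmod (gauss l y x) = exp (- (norm (x - y) ^ 2) / (2 * l ^ 2))"
  unfolding gauss_def by simp

lemma norm_gauss_powr:
  assumes "p > 0"
  shows "cmod (gauss l y x) powr p = cmod (gauss (l / sqrt p) y x)"
  using assms by (simp add: norm_gauss powr_def power_divide field_simps)

lemma integrable_gauss:
  fixes y :: "'a::euclidean_space"
  assumes "l > 0"
  shows "integrable lborel (gauss l y)"
  using ft_gauss(1)[OF assms, of y 0] by simp

lemma in_Lp_gauss:
  fixes y :: "real^'n"
  assumes "l > 0" "p > 0"
  shows "in_Lp p (gauss l y)"
  unfolding in_Lp_def
proof
  show "gauss l y \<in> borel_measurable lebesgue"
    by (rule measurable_completion) simp
  have "integrable lborel (\<lambda>x. cmod (gauss (l / sqrt p) y x))"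
    by (intro integrable_norm integrable_gauss) (use assms in auto)
  then have "integrable lborel (\<lambda>x. cmod (gauss l y x) powr p)"
    by (simp add: norm_gauss_powr[OF assms(2)])
  then show "integrable lebesgue (\<lambda>x. cmod (gauss l y x) powr p)"
    by (rule integrable_completion[THEN iffD2, rotated]) simp
qed

definition Gt :: "(real^'n \<Rightarrow> complex) \<Rightarrow> real \<Rightarrow> real \<Rightarrow> real^'n \<Rightarrow> complex" where
  "Gt a l t \<xi> = exp (- complex_of_real t * a \<xi>) * complex_of_real (exp (- (l^2 * norm \<xi> ^ 2) / 2))"

definition Vt :: "(real^'n \<Rightarrow> complex) \<Rightarrow> real \<Rightarrow> real \<Rightarrow> real^'n \<Rightarrow> complex" where
  "Vt a l t w = (\<integral>\<xi>. Gt a l t \<xi> * exp (\<i> * complex_of_real (\<xi> \<bullet> w)) \<partial>lborel)"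

lemma S_gauss:
  fixes y :: "real^'n"
  assumes "is_elliptic_semigroup p a S" "t \<ge> 0" "l > 0"
  shows "S t (gauss l y) x = complex_of_real ((2 * pi) powr (- real CARD('n) / 2) * l ^ CARD('n)) * Vt a l t (x - y)"
proof -
  have "S t (gauss l y) = fourier_inv (\<lambda>\<xi>. exp (- complex_of_real t * a \<xi>) * fourier (gauss l y) \<xi>)"
    using assms(1,2) schwartz_gauss[OF assms(3)] unfolding is_elliptic_semigroup_def by blast
  then have "S t (gauss l y) x = complex_of_real ((2 * pi) powr (- real CARD('n) / 2)) *
     (\<integral>\<xi>. exp (- complex_of_real t * a \<xi>) * fourier (gauss l y) \<xi> * exp (\<i> * complex_of_real (\<xi> \<bullet> x)) \<partial>lborel)"
    by (simp add: fourier_inv_def)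
  also have "(\<lambda>\<xi>. exp (- complex_of_real t * a \<xi>) * fourier (gauss l y) \<xi> * exp (\<i> * complex_of_real (\<xi> \<bullet> x))) =
     (\<lambda>\<xi>. complex_of_real (l ^ CARD('n)) * (Gt a l t \<xi> * exp (\<i> * complex_of_real (\<xi> \<bullet> (x - y)))))"
  proof
    fix \<xi> :: "real^'n"
    have e: "exp (- \<i> * complex_of_real (\<xi> \<bullet> y)) * exp (\<i> * complex_of_real (\<xi> \<bullet> x)) = exp (\<i> * complex_of_real (\<xi> \<bullet> (x - y)))"
      by (simp add: exp_add[symmetric] inner_diff_right algebra_simps)
    show "exp (- complex_of_real t * a \<xi>) * fourier (gauss l y) \<xi> * exp (\<i> * complex_of_real (\<xi> \<bullet> x)) =
      complex_of_real (l ^ CARD('n)) * (Gt a l t \<xi> * exp (\<i> * complex_of_real (\<xi> \<bullet> (x - y))))"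
      unfolding fourier_gauss[OF assms(3)] Gt_def e[symmetric] by (simp add: algebra_simps)
  qed
  also have "(\<integral>\<xi>. complex_of_real (l ^ CARD('n)) * (Gt a l t \<xi> * exp (\<i> * complex_of_real (\<xi> \<bullet> (x - y)))) \<partial>lborel) =
      complex_of_real (l ^ CARD('n)) * Vt a l t (x - y)"
    unfolding Vt_def by (rule integral_mult_right_zero)
  finally show ?thesis by (simp add: mult.assoc)
qed

lemma mvt_vec:
  fixes f :: "real \<Rightarrow> complex"
  assumes "\<And>s. (f has_vector_derivative f' s) (at s)"
    and "\<And>s. a \<le> s \<Longrightarrow> s \<le> b \<Longrightarrow> cmod (f' s) \<le> B"
    and "a \<le> b"
  shows "cmod (f b - f a) \<le> B * (b - a)"
proof -
  have "norm (f b - f a) \<le> B * norm (b - a)"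
  proof (rule differentiable_bound[where S="{a..b}" and f'="\<lambda>s d. d *\<^sub>R f' s"])
    show "convex {a..b}" by simp
    show "(f has_derivative (\<lambda>d. d *\<^sub>R f' x)) (at x within {a..b})" if "x \<in> {a..b}" for x
      using assms(1)[of x] by (simp add: has_vector_derivative_def has_derivative_at_withinI)
    show "onorm (\<lambda>d. d *\<^sub>R f' x) \<le> B" if "x \<in> {a..b}" for x
    proof -
      have "onorm (\<lambda>d::real. d *\<^sub>R f' x) = onorm (\<lambda>d::real. d) * norm (f' x)"
        using onorm_scaleR_left[OF bounded_linear_ident, of "f' x"] by simp
      then show ?thesis using assms(2)[of x] that by (simp add: onorm_id)
    qed
  qed (use assms(3) in auto)
  then show ?thesis using assms(3) by simp
qed

definition bdiff :: "real \<Rightarrow> (real \<Rightarrow> complex) \<Rightarrow> real \<Rightarrow> complex" where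
  "bdiff h f s = f s - f (s - h)"

lemma bdiff_deriv:
  assumes "\<And>s. (f has_vector_derivative f' s) (at s)"
  shows "(bdiff h f has_vector_derivative bdiff h f' s) (at s)"
proof -
  have "((f \<circ> (\<lambda>s. s - h)) has_vector_derivative (1 *\<^sub>R f' (s - h))) (at s)"
    by (rule vector_diff_chain_at) (auto intro!: derivative_eq_intros assms)
  then have "((\<lambda>s. f (s - h)) has_vector_derivative f' (s - h)) (at s)" by (simp add: comp_def)
  then show ?thesis unfolding bdiff_def by (intro has_vector_derivative_diff assms)
qed

lemma bdiff_iter_bound:
  fixes fs :: "nat \<Rightarrow> real \<Rightarrow> complex"
  assumes "\<And>k s. (fs k has_vector_derivative fs (Suc k) s) (at s)"
    and "\<And>\<sigma>. \<bar>\<sigma> - s0\<bar> \<le> real n * \<bar>h\<bar> \<Longrightarrow> cmod (fs n \<sigma>) \<le> B"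
  shows "cmod ((bdiff h ^^ n) (fs 0) s0) \<le> \<bar>h\<bar> ^ n * B"
  using assms
proof (induction n arbitrary: fs B)
  case 0
  then show ?case by simp
next
  case (Suc n)
  define gs where "gs k = bdiff h (fs k)" for k
  have d: "(gs k has_vector_derivative gs (Suc k) s) (at s)" for k s
    unfolding gs_def by (rule bdiff_deriv) (rule Suc.prems(1))
  have b: "cmod (gs n \<sigma>) \<le> \<bar>h\<bar> * B" if "\<bar>\<sigma> - s0\<bar> \<le> real n * \<bar>h\<bar>" for \<sigma>
  proof -
    have bb: "cmod (fs (Suc n) s) \<le> B" if "min (\<sigma> - h) \<sigma> \<le> s" "s \<le> max (\<sigma> - h) \<sigma>" for s
    proof (rule Suc.prems(2))
      show "\<bar>s - s0\<bar> \<le> real (Suc n) * \<bar>h\<bar>"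
        using that \<open>\<bar>\<sigma> - s0\<bar> \<le> real n * \<bar>h\<bar>\<close> by (auto simp: algebra_simps abs_if split: if_splits)
    qed
    show ?thesis
    proof (cases "h \<ge> 0")
      case True
      have "cmod (fs n \<sigma> - fs n (\<sigma> - h)) \<le> B * (\<sigma> - (\<sigma> - h))"
        by (rule mvt_vec[OF Suc.prems(1)]) (use bb True in auto)
      then show ?thesis using True by (simp add: gs_def bdiff_def mult.commute)
    next
      case False
      have "cmod (fs n (\<sigma> - h) - fs n \<sigma>) \<le> B * ((\<sigma> - h) - \<sigma>)"
        by (rule mvt_vec[OF Suc.prems(1)]) (use bb False in auto)
      then show ?thesis using False by (simp add: gs_def bdiff_def mult.commute norm_minus_commute)
    qed
  qed
  have "cmod ((bdiff h ^^ n) (gs 0) s0) \<le> \<bar>h\<bar> ^ n * (\<bar>h\<bar> * B)"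
    by (rule Suc.IH[OF d b])
  moreover have "(bdiff h ^^ Suc n) (fs 0) = (bdiff h ^^ n) (gs 0)"
    by (simp only: gs_def funpow_Suc_right comp_def)
  ultimately show ?case by (simp add: mult_ac del: funpow.simps)
qed

lemma shift_integrable:
  fixes F :: "'a::euclidean_space \<Rightarrow> complex"
  assumes "integrable lborel F"
  shows "integrable lborel (\<lambda>\<xi>. F (\<xi> + c))" "(\<integral>\<xi>. F (\<xi> + c) \<partial>lborel) = (\<integral>\<xi>. F \<xi> \<partial>lborel)"
proof -
  have m: "((+) c) \<in> borel_measurable lborel" by simp
  have Fm: "F \<in> borel_measurable borel" using borel_measurable_integrable[OF assms] by simp
  have "integrable (distr lborel borel ((+) c)) F" using assms by (simp add: lborel_distr_plus)
  then show "integrable lborel (\<lambda>\<xi>. F (\<xi> + c))"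
    by (subst (asm) integrable_distr_eq[OF m Fm]) (simp add: add.commute)
  have "(\<integral>\<xi>. F \<xi> \<partial>lborel) = (\<integral>\<xi>. F \<xi> \<partial>(distr lborel borel ((+) c)))" by (simp add: lborel_distr_plus)
  also have "\<dots> = (\<integral>\<xi>. F (c + \<xi>) \<partial>lborel)" by (rule integral_distr[OF m Fm])
  finally show "(\<integral>\<xi>. F (\<xi> + c) \<partial>lborel) = (\<integral>\<xi>. F \<xi> \<partial>lborel)" by (simp add: add.commute)
qed

lemma integrable_mult_expi:
  fixes F :: "'a::euclidean_space \<Rightarrow> complex"
  assumes "integrable lborel F"
  shows "integrable lborel (\<lambda>\<xi>. F \<xi> * exp (\<i> * complex_of_real (\<xi> \<bullet> w)))"
proof (rule Bochner_Integration.integrable_bound[OF integrable_norm[OF assms]])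
  have "(\<lambda>\<xi>::'a. exp (\<i> * complex_of_real (\<xi> \<bullet> w))) \<in> borel_measurable borel"
    by (intro borel_measurable_continuous_onI continuous_intros)
  then have "(\<lambda>\<xi>::'a. exp (\<i> * complex_of_real (\<xi> \<bullet> w))) \<in> borel_measurable lborel" by simp
  then show "(\<lambda>\<xi>. F \<xi> * exp (\<i> * complex_of_real (\<xi> \<bullet> w))) \<in> borel_measurable lborel"
    using borel_measurable_integrable[OF assms] by measurable
qed (auto simp: norm_mult)

definition Ifo :: "('a::euclidean_space \<Rightarrow> complex) \<Rightarrow> 'a \<Rightarrow> complex" where
  "Ifo F w = (\<integral>\<xi>. F \<xi> * exp (\<i> * complex_of_real (\<xi> \<bullet> w)) \<partial>lborel)"

definition sdiff :: "real \<Rightarrow> 'a::euclidean_space \<Rightarrow> ('a \<Rightarrow> complex) \<Rightarrow> 'a \<Rightarrow> complex" where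
  "sdiff h e F \<xi> = F \<xi> - F (\<xi> - h *\<^sub>R e)"

lemma Ifo_shift:
  fixes F :: "'a::euclidean_space \<Rightarrow> complex"
  assumes "integrable lborel F" "h * (e \<bullet> w) = pi"
  shows "Ifo (\<lambda>\<xi>. F (\<xi> - h *\<^sub>R e)) w = - Ifo F w"
proof -
  let ?g = "\<lambda>\<xi>. F \<xi> * exp (\<i> * complex_of_real (\<xi> \<bullet> w))"
  have "Ifo F w = (\<integral>\<xi>. ?g (\<xi> + (- h *\<^sub>R e)) \<partial>lborel)"
    unfolding Ifo_def by (rule shift_integrable(2)[symmetric]) (rule integrable_mult_expi[OF assms(1)])
  also have "\<dots> = (\<integral>\<xi>. (- 1) * (F (\<xi> - h *\<^sub>R e) * exp (\<i> * complex_of_real (\<xi> \<bullet> w))) \<partial>lborel)"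
  proof (rule Bochner_Integration.integral_cong[OF refl])
    fix \<xi> :: 'a
    have "exp (\<i> * complex_of_real ((\<xi> + - h *\<^sub>R e) \<bullet> w)) = exp (\<i> * complex_of_real (\<xi> \<bullet> w)) * exp (- \<i> * complex_of_real (h * (e \<bullet> w)))"
      by (simp add: inner_add_left exp_add[symmetric] algebra_simps)
    also have "exp (- \<i> * complex_of_real (h * (e \<bullet> w))) = - 1"
      unfolding assms(2) by (simp add: exp_minus Complex.exp_pi_i' )
    finally show "?g (\<xi> + - h *\<^sub>R e) = (- 1) * (F (\<xi> - h *\<^sub>R e) * exp (\<i> * complex_of_real (\<xi> \<bullet> w)))"
      by simp
  qed
  also have "\<dots> = - Ifo (\<lambda>\<xi>. F (\<xi> - h *\<^sub>R e)) w"
    unfolding Ifo_def by (subst integral_mult_right_zero) simp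
  finally show ?thesis by simp
qed

lemma Ifo_iter:
  fixes F :: "'a::euclidean_space \<Rightarrow> complex"
  assumes "integrable lborel F" "h * (e \<bullet> w) = pi"
  shows "integrable lborel ((sdiff h e ^^ n) F) \<and> Ifo ((sdiff h e ^^ n) F) w = 2 ^ n * Ifo F w"
proof (induction n)
  case 0
  then show ?case using assms by simp
next
  case (Suc n)
  let ?F = "(sdiff h e ^^ n) F"
  have i1: "integrable lborel ?F" using Suc by simp
  have i2: "integrable lborel (\<lambda>\<xi>. ?F (\<xi> - h *\<^sub>R e))"
    using shift_integrable(1)[OF i1, of "- h *\<^sub>R e"] by simp
  have eq: "(sdiff h e ^^ Suc n) F = (\<lambda>\<xi>. ?F \<xi> - ?F (\<xi> - h *\<^sub>R e))"
    by (simp add: sdiff_def[abs_def])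
  have "Ifo (\<lambda>\<xi>. ?F \<xi> - ?F (\<xi> - h *\<^sub>R e)) w = Ifo ?F w - Ifo (\<lambda>\<xi>. ?F (\<xi> - h *\<^sub>R e)) w"
    unfolding Ifo_def
    by (simp add: left_diff_distrib integrable_mult_expi[OF i1] integrable_mult_expi[OF i2] del: exp_of_real)
  also have "\<dots> = 2 * Ifo ?F w" using Ifo_shift[OF i1 assms(2)] by simp
  finally show ?case using Suc i1 i2 unfolding eq by auto
qed

lemma sdiff_line:
  fixes F :: "'a::euclidean_space \<Rightarrow> complex"
  shows "(sdiff h e ^^ n) F (\<xi> + s *\<^sub>R e) = (bdiff h ^^ n) (\<lambda>s. F (\<xi> + s *\<^sub>R e)) s"
proof (induction n arbitrary: F s)
  case 0
  then show ?case by simp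
next
  case (Suc n)
  have "(sdiff h e ^^ Suc n) F = (sdiff h e ^^ n) (sdiff h e F)" by (simp only: funpow_Suc_right comp_def)
  moreover have "(bdiff h ^^ Suc n) (\<lambda>s. F (\<xi> + s *\<^sub>R e)) = (bdiff h ^^ n) (bdiff h (\<lambda>s. F (\<xi> + s *\<^sub>R e)))"
    by (simp only: funpow_Suc_right comp_def)
  moreover have "bdiff h (\<lambda>s. F (\<xi> + s *\<^sub>R e)) = (\<lambda>s. sdiff h e F (\<xi> + s *\<^sub>R e))"
    by (auto simp: bdiff_def sdiff_def algebra_simps fun_eq_iff)
  ultimately show ?case using Suc.IH[of "sdiff h e F"] by simp
qed

lemma pfun_cont: "pfun P \<Longrightarrow> continuous_on UNIV P"
  by (induction rule: pfun.induct) (auto intro!: continuous_intros)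

lemma pfun_exp_chain:
  assumes "pfun Q"
  shows "\<exists>Ps. Ps 0 = (\<lambda>_. 1) \<and> (\<forall>k. pfun (Ps k)) \<and>
    (\<forall>k z s. ((\<lambda>s. Ps k (z + s *\<^sub>R v) * exp (Q (z + s *\<^sub>R v))) has_vector_derivative
        Ps (Suc k) (z + s *\<^sub>R v) * exp (Q (z + s *\<^sub>R v))) (at s))"
proof -
  define R where "R P P' \<longleftrightarrow> pfun P' \<and> (\<forall>z s. ((\<lambda>s. P (z + s *\<^sub>R v) * exp (Q (z + s *\<^sub>R v))) has_vector_derivative
        P' (z + s *\<^sub>R v) * exp (Q (z + s *\<^sub>R v))) (at s))" for P P'
  define Ps where "Ps = rec_nat (\<lambda>_. 1) (\<lambda>_ P. SOME P'. R P P')"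
  have ex: "pfun P \<Longrightarrow> \<exists>P'. R P P'" for P
    unfolding R_def using pfun_exp_deriv[OF _ assms] by blast
  have p: "pfun (Ps k)" for k
  proof (induction k)
    case 0
    then show ?case by (simp add: Ps_def pfun.intros)
  next
    case (Suc k)
    then have "R (Ps k) (Ps (Suc k))" unfolding Ps_def by (simp add: someI_ex[OF ex])
    then show ?case by (simp add: R_def)
  qed
  have "R (Ps k) (Ps (Suc k))" for k
    using p[of k] unfolding Ps_def by (simp add: someI_ex[OF ex])
  then show ?thesis using p unfolding R_def by (intro exI[of _ Ps]) (auto simp: Ps_def)
qed

definition Qz :: "(real^'n \<Rightarrow> complex) \<Rightarrow> real \<Rightarrow> real \<times> (real^'n) \<Rightarrow> complex" where
  "Qz a l z = - complex_of_real (fst z) * a (snd z) + complex_of_real (- (l^2 * norm (snd z) ^ 2) / 2)"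

lemma Gt_Qz: "Gt a l t \<xi> = exp (Qz a l (t, \<xi>))"
  by (simp only: Gt_def Qz_def exp_add exp_of_real fst_conv snd_conv)

lemma pfun_Qz:
  assumes "pfun (\<lambda>z::real \<times> (real^'n). a (snd z))"
  shows "pfun (Qz a l)"
proof -
  have f: "pfun (\<lambda>z::real \<times> (real^'n). complex_of_real (fst z))"
    using plin[of "(1::real, 0::real^'n)"] by (simp add: inner_prod_def)
  have n: "pfun (\<lambda>z::real \<times> (real^'n). complex_of_real (norm (snd z) ^ 2))"
  proof -
    have eq: "complex_of_real (norm (snd z) ^ 2) = (\<Sum>b\<in>(Basis::(real^'n) set). complex_of_real (z \<bullet> (0, b)) ^ 2)" for z :: "real \<times> (real^'n)"
    proof -
      have "norm (snd z) ^ 2 = (\<Sum>b\<in>(Basis::(real^'n) set). (snd z \<bullet> b) ^ 2)"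
        by (subst power2_norm_eq_inner, subst euclidean_inner) (simp add: power2_eq_square)
      then show ?thesis by (simp add: inner_prod_def)
    qed
    show ?thesis unfolding eq by (intro pfun_sum pfun_power plin) auto
  qed
  have "pfun (\<lambda>z. (- 1) * complex_of_real (fst z) * a (snd z) + complex_of_real (- (l^2) / 2) * complex_of_real (norm (snd z) ^ 2))"
    by (intro pfun.intros f n assms)
  then show ?thesis unfolding Qz_def[abs_def] by simp
qed

lemma Re_Qz:
  assumes "\<And>\<xi>. Re (a \<xi>) \<ge> 0" "t \<ge> 0"
  shows "Re (Qz a l (t, \<xi>)) \<le> - (l^2 * norm \<xi> ^ 2) / 2"
  using assms mult_nonneg_nonneg[OF assms(2) assms(1)[of \<xi>]] by (simp add: Qz_def)

lemma Gt_cont: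
  assumes "pfun (\<lambda>z::real \<times> (real^'n). a (snd z))"
  shows "continuous_on UNIV (Gt a l t)"
proof -
  have "continuous_on UNIV (\<lambda>\<xi>::real^'n. Qz a l (t, \<xi>))"
    by (rule continuous_on_compose2[of UNIV "Qz a l"]) (auto intro!: continuous_intros pfun_cont pfun_Qz assms)
  then show ?thesis unfolding Gt_Qz[abs_def] by (intro continuous_intros)
qed

lemma norm_Gt:
  assumes "\<And>\<xi>. Re (a \<xi>) \<ge> 0" "t \<ge> 0" "l > 0"
  shows "cmod (Gt a l t \<xi>) \<le> cmod (gauss (1 / l) 0 \<xi>)"
  using Re_Qz[OF assms(1,2), where l=l and \<xi>=\<xi>] assms(3) by (simp add: Gt_Qz norm_gauss power_divide field_simps)

lemma Gt_integrable:
  assumes "pfun (\<lambda>z::real \<times> (real^'n). a (snd z))" "\<And>\<xi>. Re (a \<xi>) \<ge> 0" "t \<ge> 0" "l > 0"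
  shows "integrable lborel (Gt a l t)"
proof (rule Bochner_Integration.integrable_bound[OF integrable_norm[OF integrable_gauss[of "1/l" 0]]])
  show "Gt a l t \<in> borel_measurable lborel"
    using borel_measurable_continuous_onI[OF Gt_cont[OF assms(1)]] by simp
qed (use assms in \<open>auto intro!: AE_I2 norm_Gt\<close>)

lemma Vt_Ifo: "Vt a l t w = Ifo (Gt a l t) w"
  by (simp add: Vt_def Ifo_def)

lemma Vt_bound0:
  assumes "pfun (\<lambda>z::real \<times> (real^'n). a (snd z))" "\<And>\<xi>. Re (a \<xi>) \<ge> 0" "t \<ge> 0" "l > 0"
  shows "cmod (Vt a l t w) \<le> (\<integral>\<xi>. cmod (gauss (1 / l) (0::real^'n) \<xi>) \<partial>lborel)"
proof -
  have "cmod (Vt a l t w) \<le> (\<integral>\<xi>. norm (Gt a l t \<xi> * exp (\<i> * complex_of_real (\<xi> \<bullet> w))) \<partial>lborel)"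
    unfolding Vt_def by (rule integral_norm_bound)
  also have "\<dots> \<le> (\<integral>\<xi>. cmod (gauss (1 / l) (0::real^'n) \<xi>) \<partial>lborel)"
    by (intro integral_mono integrable_norm integrable_mult_expi Gt_integrable assms integrable_gauss)
       (use assms in \<open>auto simp: norm_mult intro!: norm_Gt\<close>)
  finally show ?thesis .
qed

lemma pointwise_D_bound:
  fixes \<xi> e :: "real^'n"
  assumes Ck: "0 \<le> C" "\<And>z. cmod (P z) \<le> C * (1 + norm z ^ 2) ^ k"
    and M: "\<And>s. s \<ge> 0 \<Longrightarrow> (1 + s) ^ k * exp (- (l^2/4) * s) \<le> M"
    and ra: "\<And>\<xi>. Re (a \<xi>) \<ge> 0" and t: "0 \<le> t" "t \<le> T" and ne: "norm e = 1"
    and sig: "\<bar>\<sigma>\<bar> \<le> R"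
  shows "cmod (P (t, \<xi> + \<sigma> *\<^sub>R e) * exp (Qz a l (t, \<xi> + \<sigma> *\<^sub>R e))) \<le>
     (C * (1 + T^2) ^ k * M * exp (l^2 * R^2 / 4)) * exp (- (l^2 * norm \<xi> ^ 2) / 8)"
proof -
  define s where "s = norm (\<xi> + \<sigma> *\<^sub>R e) ^ 2"
  have s0: "s \<ge> 0" by (simp add: s_def)
  have M0: "M \<ge> 0" using M[of 0] by (smt (verit) exp_gt_zero mult_nonneg_nonneg zero_le_power)
  have p1: "cmod (P (t, \<xi> + \<sigma> *\<^sub>R e)) \<le> C * (1 + T^2) ^ k * (1 + s) ^ k"
  proof -
    have "norm (t, \<xi> + \<sigma> *\<^sub>R e) ^ 2 = t^2 + s" by (simp add: norm_Pair s_def)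
    then have "1 + norm (t, \<xi> + \<sigma> *\<^sub>R e) ^ 2 \<le> (1 + T^2) * (1 + s)"
    proof -
      have "t^2 \<le> T^2" using t by (simp add: power_mono)
      then have "1 + t^2 + s \<le> (1 + T^2) * (1 + s)" using s0
        by (simp add: algebra_simps) (smt (verit) mult_nonneg_nonneg zero_le_power2)
      then show ?thesis using \<open>norm (t, \<xi> + \<sigma> *\<^sub>R e) ^ 2 = t^2 + s\<close> by simp
    qed
    then have "(1 + norm (t, \<xi> + \<sigma> *\<^sub>R e) ^ 2) ^ k \<le> ((1 + T^2) * (1 + s)) ^ k"
      by (intro power_mono) auto
    then show ?thesis using Ck(2)[of "(t, \<xi> + \<sigma> *\<^sub>R e)"] Ck(1)
      by (simp add: power_mult_distrib) (smt (verit) mult_left_mono mult.assoc)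
  qed
  have p2: "cmod (exp (Qz a l (t, \<xi> + \<sigma> *\<^sub>R e))) \<le> exp (- (l^2/2) * s)"
    using Re_Qz[OF ra t(1), where l=l and \<xi>="\<xi> + \<sigma> *\<^sub>R e"] by (simp add: s_def)
  have p3: "(1 + s) ^ k * exp (- (l^2/2) * s) \<le> M * exp (- (l^2/4) * s)"
  proof -
    have "(1 + s) ^ k * exp (- (l^2/2) * s) = ((1 + s) ^ k * exp (- (l^2/4) * s)) * exp (- (l^2/4) * s)"
      by (simp add: mult.assoc exp_add[symmetric])
    also have "\<dots> \<le> M * exp (- (l^2/4) * s)" by (intro mult_right_mono M s0) simp
    finally show ?thesis .
  qed
  have p4: "exp (- (l^2/4) * s) \<le> exp (l^2 * R^2 / 4) * exp (- (l^2 * norm \<xi> ^ 2) / 8)"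
  proof -
    have "norm \<xi> \<le> norm (\<xi> + \<sigma> *\<^sub>R e) + \<bar>\<sigma>\<bar>"
      using norm_triangle_ineq4[of "\<xi> + \<sigma> *\<^sub>R e" "\<sigma> *\<^sub>R e"] ne by simp
    then have "norm \<xi> ^ 2 \<le> (norm (\<xi> + \<sigma> *\<^sub>R e) + \<bar>\<sigma>\<bar>) ^ 2" by (simp add: power_mono)
    also have "\<dots> \<le> 2 * s + 2 * \<sigma>^2"
      using sum_squares_ge_zero[of "norm (\<xi> + \<sigma> *\<^sub>R e) - \<bar>\<sigma>\<bar>" 0] unfolding s_def
      by (simp add: power2_eq_square algebra_simps)
    finally have "norm \<xi> ^ 2 \<le> 2 * s + 2 * \<sigma>^2" .
    moreover have "\<sigma>^2 \<le> R^2" using sig by (metis abs_ge_zero order.trans power2_abs power_mono)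
    ultimately have "- (l^2/4) * s \<le> l^2 * R^2 / 4 + (- (l^2 * norm \<xi> ^ 2) / 8)"
      using mult_left_mono[of "norm \<xi> ^ 2" "2 * s + 2 * R^2" "l^2"]
      by (simp add: algebra_simps)
    then show ?thesis by (simp add: exp_add[symmetric])
  qed
  have "cmod (P (t, \<xi> + \<sigma> *\<^sub>R e) * exp (Qz a l (t, \<xi> + \<sigma> *\<^sub>R e))) \<le>
      (C * (1 + T^2) ^ k * (1 + s) ^ k) * exp (- (l^2/2) * s)"
    unfolding norm_mult by (intro mult_mono p1 p2) (use Ck(1) s0 in \<open>auto intro!: mult_nonneg_nonneg\<close>)
  also have "\<dots> = C * (1 + T^2) ^ k * ((1 + s) ^ k * exp (- (l^2/2) * s))" by simp
  also have "\<dots> \<le> C * (1 + T^2) ^ k * (M * (exp (l^2 * R^2 / 4) * exp (- (l^2 * norm \<xi> ^ 2) / 8)))"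
    by (intro mult_left_mono order.trans[OF p3] mult_left_mono[OF p4 M0]) (use Ck(1) in auto)
  finally show ?thesis by (simp add: mult_ac)
qed

lemma Vt_decay:
  fixes a :: "real^'n \<Rightarrow> complex" and e :: "real^'n"
  assumes pa: "pfun (\<lambda>z::real \<times> (real^'n). a (snd z))" and ra: "\<And>\<xi>. Re (a \<xi>) \<ge> 0"
    and l: "l > 0" and T: "T \<ge> 0" and ne: "norm e = 1"
  shows "\<exists>K. \<forall>t w. 0 \<le> t \<longrightarrow> t \<le> T \<longrightarrow> 1 \<le> \<bar>w \<bullet> e\<bar> \<longrightarrow> cmod (Vt a l t w) \<le> K / \<bar>w \<bullet> e\<bar> ^ N"
proof -
  obtain Ps where Ps0: "Ps 0 = (\<lambda>_. 1)" and Psp: "\<And>k. pfun (Ps k)"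
    and Psd: "\<And>k z s. ((\<lambda>s. Ps k (z + s *\<^sub>R (0, e)) * exp (Qz a l (z + s *\<^sub>R (0, e)))) has_vector_derivative
        Ps (Suc k) (z + s *\<^sub>R (0, e)) * exp (Qz a l (z + s *\<^sub>R (0, e)))) (at s)"
    using pfun_exp_chain[OF pfun_Qz[OF pa, of l], of "(0::real, e)"] by blast
  obtain C k where Ck: "0 \<le> C" "\<And>z. cmod (Ps N z) \<le> C * (1 + norm z ^ 2) ^ k"
    using pfun_bound[OF Psp[of N]] by blast
  obtain M where M: "\<And>s. s \<ge> 0 \<Longrightarrow> (1 + s) ^ k * exp (- (l^2/4) * s) \<le> M"
    using poly_exp_bound[of "l^2/4" k] l by auto
  define Bc where "Bc = C * (1 + T^2) ^ k * M * exp (l^2 * (real N * pi)^2 / 4)"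
  define \<Gamma> where "\<Gamma> = (\<integral>\<xi>. cmod (gauss (2 / l) (0::real^'n) \<xi>) \<partial>lborel)"
  have ng: "cmod (gauss (2 / l) (0::real^'n) \<xi>) = exp (- (l^2 * norm \<xi> ^ 2) / 8)" for \<xi>
    using l by (simp add: norm_gauss power_divide field_simps)
  have ig: "integrable lborel (\<lambda>\<xi>. cmod (gauss (2 / l) (0::real^'n) \<xi>))"
    by (intro integrable_norm integrable_gauss) (use l in simp)
  show ?thesis
  proof (intro exI[of _ "(pi / 2) ^ N * Bc * \<Gamma>"] allI impI)
    fix t and w :: "real^'n"
    assume t: "0 \<le> t" "t \<le> T" and we: "1 \<le> \<bar>w \<bullet> e\<bar>"
    define h where "h = pi / (w \<bullet> e)"
    have hw: "h * (e \<bullet> w) = pi" using we by (simp add: h_def inner_commute)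
    have habs: "\<bar>h\<bar> = pi / \<bar>w \<bullet> e\<bar>" by (simp add: h_def abs_divide)
    have hle: "\<bar>h\<bar> \<le> pi" unfolding habs using we by (simp add: divide_le_eq pi_gt_zero less_le_trans[OF zero_less_one] )
    have iG: "integrable lborel (Gt a l t)" by (rule Gt_integrable[OF pa ra t(1) l])
    note it = Ifo_iter[OF iG hw, of N]
    let ?D = "(sdiff h e ^^ N) (Gt a l t)"
    have pt: "cmod (?D \<xi>) \<le> \<bar>h\<bar> ^ N * Bc * cmod (gauss (2 / l) (0::real^'n) \<xi>)" for \<xi>
    proof -
      define fs where "fs j s = Ps j (t, \<xi> + s *\<^sub>R e) * exp (Qz a l (t, \<xi> + s *\<^sub>R e))" for j s
      have eqz: "(t, \<xi>) + s *\<^sub>R (0::real, e) = (t, \<xi> + s *\<^sub>R e)" for s by simp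
      have fd: "(fs j has_vector_derivative fs (Suc j) s) (at s)" for j s
        using Psd[of j "(t, \<xi>)" s] unfolding eqz fs_def .
      have f0: "fs 0 = (\<lambda>s. Gt a l t (\<xi> + s *\<^sub>R e))" by (simp add: fs_def[abs_def] Ps0 Gt_Qz[abs_def])
      have fb: "cmod (fs N \<sigma>) \<le> Bc * exp (- (l^2 * norm \<xi> ^ 2) / 8)" if "\<bar>\<sigma> - 0\<bar> \<le> real N * \<bar>h\<bar>" for \<sigma>
      proof -
        have "\<bar>\<sigma>\<bar> \<le> real N * pi" using that hle by (smt (verit) mult_left_mono of_nat_0_le_iff)
        note pb = pointwise_D_bound[OF Ck M ra t ne this, of \<xi>]
        then show ?thesis unfolding fs_def Bc_def by simp
      qed
      have "?D \<xi> = (bdiff h ^^ N) (fs 0) 0" unfolding f0 using sdiff_line[where h=h and e=e and n=N and \<xi>=\<xi> and s=0 and F="Gt a l t"] by simp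
      also have "cmod \<dots> \<le> \<bar>h\<bar> ^ N * (Bc * exp (- (l^2 * norm \<xi> ^ 2) / 8))"
        by (rule bdiff_iter_bound[OF fd fb])
      finally show ?thesis by (simp add: ng mult.assoc)
    qed
    have "cmod (Vt a l t w) = cmod (Ifo ?D w) / 2 ^ N" using it by (simp add: Vt_Ifo norm_mult norm_power)
    also have "cmod (Ifo ?D w) \<le> (\<integral>\<xi>. norm (?D \<xi> * exp (\<i> * complex_of_real (\<xi> \<bullet> w))) \<partial>lborel)"
      unfolding Ifo_def by (rule integral_norm_bound)
    also have "\<dots> \<le> (\<integral>\<xi>. \<bar>h\<bar> ^ N * Bc * cmod (gauss (2 / l) (0::real^'n) \<xi>) \<partial>lborel)"
      by (intro integral_mono integrable_norm integrable_mult_expi integrable_mult_right ig)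
         (use it pt in \<open>auto simp: norm_mult\<close>)
    also have "\<dots> = \<bar>h\<bar> ^ N * Bc * \<Gamma>" unfolding \<Gamma>_def by simp
    finally have "cmod (Vt a l t w) \<le> \<bar>h\<bar> ^ N * Bc * \<Gamma> / 2 ^ N" by (simp add: divide_right_mono)
    also have "\<dots> = (pi / 2) ^ N * Bc * \<Gamma> / \<bar>w \<bullet> e\<bar> ^ N"
      unfolding habs by (simp add: power_divide field_simps)
    finally show "cmod (Vt a l t w) \<le> (pi / 2) ^ N * Bc * \<Gamma> / \<bar>w \<bullet> e\<bar> ^ N" .
  qed
qed

definition om :: "real \<Rightarrow> real" where
  "om s = (if \<bar>s\<bar> \<le> 1 then 1 else 1 / s^2)"

lemma om_pos: "0 < om s" unfolding om_def by (cases "\<bar>s\<bar> \<le> 1") auto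
lemma om_le1: "om s \<le> 1"
proof (cases "\<bar>s\<bar> \<le> 1")
  case False
  then have "1 \<le> \<bar>s\<bar>^2" by (intro one_le_power) auto
  then have "1 \<le> s^2" by simp
  then show ?thesis using False by (simp add: om_def)
qed (simp add: om_def)

lemma Vt_prod_bound:
  fixes a :: "real^'n \<Rightarrow> complex"
  assumes pa: "pfun (\<lambda>z::real \<times> (real^'n). a (snd z))" and ra: "\<And>\<xi>. Re (a \<xi>) \<ge> 0"
    and l: "l > 0" and T: "T \<ge> 0"
  shows "\<exists>K. \<forall>t w. 0 \<le> t \<longrightarrow> t \<le> T \<longrightarrow> cmod (Vt a l t w) \<le> K * (\<Prod>b\<in>Basis. om (w \<bullet> b))"
proof -
  let ?N = "2 * DIM(real^'n)"
  have "\<forall>b\<in>(Basis::(real^'n) set). \<exists>K. \<forall>t w. 0 \<le> t \<longrightarrow> t \<le> T \<longrightarrow> 1 \<le> \<bar>w \<bullet> b\<bar> \<longrightarrow> cmod (Vt a l t w) \<le> K / \<bar>w \<bullet> b\<bar> ^ ?N"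
    using Vt_decay[OF pa ra l T] by auto
  then obtain Kf where Kf0: "\<forall>b\<in>(Basis::(real^'n) set). \<forall>t w. 0 \<le> t \<longrightarrow> t \<le> T \<longrightarrow> 1 \<le> \<bar>w \<bullet> b\<bar> \<longrightarrow> cmod (Vt a l t w) \<le> Kf b / \<bar>w \<bullet> b\<bar> ^ ?N"
    by (rule bchoice[elim_format]) blast
  have Kf: "cmod (Vt a l t w) \<le> Kf b / \<bar>w \<bullet> b\<bar> ^ ?N" if "b \<in> Basis" "0 \<le> t" "t \<le> T" "1 \<le> \<bar>w \<bullet> b\<bar>" for b t w
    using Kf0 that by blast
  define K0 where "K0 = (\<integral>\<xi>. cmod (gauss (1 / l) (0::real^'n) \<xi>) \<partial>lborel)"
  have K0: "K0 \<ge> 0" unfolding K0_def by simp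
  define K where "K = K0 + (\<Sum>b\<in>(Basis::(real^'n) set). \<bar>Kf b\<bar>)"
  show ?thesis
  proof (intro exI[of _ K] allI impI)
    fix t and w :: "real^'n"
    assume t: "0 \<le> t" "t \<le> T"
    have b0: "cmod (Vt a l t w) \<le> K0" unfolding K0_def by (rule Vt_bound0[OF pa ra t(1) l])
    show "cmod (Vt a l t w) \<le> K * (\<Prod>b\<in>Basis. om (w \<bullet> b))"
    proof (cases "\<forall>b\<in>(Basis::(real^'n) set). \<bar>w \<bullet> b\<bar> \<le> 1")
      case True
      then have "(\<Prod>b\<in>Basis. om (w \<bullet> b)) = 1" by (simp add: om_def)
      moreover have "K0 \<le> K" unfolding K_def by (simp add: sum_nonneg)
      ultimately show ?thesis using b0 by simp
    next
      case False
      define Mx where "Mx = Max ((\<lambda>b. \<bar>w \<bullet> b\<bar>) ` (Basis::(real^'n) set))"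
      have "Mx \<in> (\<lambda>b. \<bar>w \<bullet> b\<bar>) ` (Basis::(real^'n) set)" unfolding Mx_def by (rule Max_in) auto
      then obtain b0 where b0B: "b0 \<in> Basis" and b0M: "\<bar>w \<bullet> b0\<bar> = Mx" by auto
      have leM: "\<bar>w \<bullet> b\<bar> \<le> Mx" if "b \<in> Basis" for b
        unfolding Mx_def using that by (intro Max_ge) auto
      have M1: "Mx > 1" using False leM by force
      have om_ge: "om (w \<bullet> b) \<ge> 1 / Mx^2" if "b \<in> Basis" for b
      proof (cases "\<bar>w \<bullet> b\<bar> \<le> 1")
        case True
        have "1 < Mx^2" using M1 by (simp add: one_less_power)
        then have "1 / Mx^2 \<le> 1" by (simp add: divide_le_eq)
        then show ?thesis using True by (simp add: om_def)
      next
        case False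
        have "(w \<bullet> b)^2 \<le> Mx^2" using leM[OF that] False by (metis abs_ge_zero power2_abs power_mono)
        then show ?thesis using False by (simp add: om_def frac_le)
      qed
      have "(1 / Mx^2) ^ DIM(real^'n) \<le> (\<Prod>b\<in>Basis. om (w \<bullet> b))"
        using prod_mono[of "Basis::(real^'n) set" "\<lambda>_. 1 / Mx^2" "\<lambda>b. om (w \<bullet> b)"] om_ge M1
        by (simp add: prod_constant)
      moreover have "(1 / Mx^2) ^ DIM(real^'n) = 1 / Mx ^ ?N" by (simp add: power_mult power_one_over)
      ultimately have pr: "1 / Mx ^ ?N \<le> (\<Prod>b\<in>Basis. om (w \<bullet> b))" by simp
      have "cmod (Vt a l t w) \<le> Kf b0 / Mx ^ ?N" using Kf[OF b0B t, of w] b0M M1 by simp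
      also have "\<dots> \<le> \<bar>Kf b0\<bar> * (1 / Mx ^ ?N)" using M1 by (simp add: divide_right_mono)
      also have "\<dots> \<le> K * (1 / Mx ^ ?N)"
      proof (rule mult_right_mono)
        have "\<bar>Kf b0\<bar> \<le> (\<Sum>b\<in>(Basis::(real^'n) set). \<bar>Kf b\<bar>)"
          by (rule member_le_sum) (use b0B in auto)
        then show "\<bar>Kf b0\<bar> \<le> K" unfolding K_def using K0 by linarith
      qed (use M1 in simp)
      also have "\<dots> \<le> K * (\<Prod>b\<in>Basis. om (w \<bullet> b))"
        by (rule mult_left_mono[OF pr]) (simp add: K_def K0 sum_nonneg)
      finally show ?thesis .
    qed
  qed
qed

lemma hom_symbol_pfun:
  fixes c :: "('n::finite \<Rightarrow> nat) \<Rightarrow> complex"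
  shows "pfun (\<lambda>z::real \<times> (real^'n). hom_symbol m c (snd z))"
proof (cases "finite {\<alpha>::'n \<Rightarrow> nat. (\<Sum>i\<in>UNIV. \<alpha> i) = m}")
  case True
  have "pfun (\<lambda>z::real \<times> (real^'n). \<Sum>\<alpha>\<in>{\<alpha>::'n \<Rightarrow> nat. (\<Sum>i\<in>UNIV. \<alpha> i) = m}.
      c \<alpha> * \<i> ^ m * (\<Prod>i\<in>UNIV. complex_of_real (z \<bullet> (0, axis i 1)) ^ \<alpha> i))"
    by (intro pfun_sum True pfun.intros pfun_prod pfun_power) auto
  then show ?thesis by (simp add: hom_symbol_def inner_prod_def inner_axis)
next
  case False
  then show ?thesis by (simp add: hom_symbol_def pfun.intros)
qed

lemma hom_symbol_hom:
  fixes c :: "('n::finite \<Rightarrow> nat) \<Rightarrow> complex" and \<xi> :: "real^'n"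
  shows "hom_symbol m c (s *\<^sub>R \<xi>) = complex_of_real (s ^ m) * hom_symbol m c \<xi>"
proof -
  have each: "c \<alpha> * \<i> ^ m * (\<Prod>i\<in>UNIV. complex_of_real ((s *\<^sub>R \<xi>) $ i) ^ \<alpha> i) =
      complex_of_real (s ^ m) * (c \<alpha> * \<i> ^ m * (\<Prod>i\<in>UNIV. complex_of_real (\<xi> $ i) ^ \<alpha> i))"
    if "\<alpha> \<in> {\<alpha>::'n \<Rightarrow> nat. (\<Sum>i\<in>UNIV. \<alpha> i) = m}" for \<alpha>
  proof -
    have "(\<Prod>i\<in>UNIV. complex_of_real ((s *\<^sub>R \<xi>) $ i) ^ \<alpha> i) = (\<Prod>i\<in>UNIV. complex_of_real s ^ \<alpha> i * complex_of_real (\<xi> $ i) ^ \<alpha> i)"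
      by (simp add: power_mult_distrib)
    also have "\<dots> = complex_of_real s ^ (\<Sum>i\<in>UNIV. \<alpha> i) * (\<Prod>i\<in>UNIV. complex_of_real (\<xi> $ i) ^ \<alpha> i)"
      by (simp add: prod.distrib power_sum)
    finally show ?thesis using that by simp
  qed
  show ?thesis unfolding hom_symbol_def sum_distrib_left by (intro sum.cong refl each) simp
qed

lemma strongly_elliptic_Re:
  assumes "strongly_elliptic m c"
  shows "Re (hom_symbol m c \<xi>) \<ge> 0"
proof -
  obtain k where "k > 0" "\<And>\<xi>. Re (hom_symbol m c \<xi>) \<ge> k * norm \<xi> ^ m"
    using assms unfolding strongly_elliptic_def by blast
  have "0 \<le> k * norm \<xi> ^ m" using \<open>k > 0\<close> by simp
  then show ?thesis using \<open>\<And>\<xi>. Re (hom_symbol m c \<xi>) \<ge> k * norm \<xi> ^ m\<close>[of \<xi>] by linarith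
qed

lemma prod_mono_enn:
  fixes f g :: "'a \<Rightarrow> ennreal"
  shows "(\<And>i. i \<in> A \<Longrightarrow> f i \<le> g i) \<Longrightarrow> prod f A \<le> prod g A"
  by (induct A rule: infinite_finite_induct) (auto intro!: mult_mono)

lemma om_meas[measurable]: "om \<in> borel_measurable borel"
  unfolding om_def by measurable

lemma inv_sq_tail: "r > 0 \<Longrightarrow> (\<integral>\<^sup>+s. ennreal (1 / s ^ 2) * indicator {r..} s \<partial>lborel) = ennreal (1 / r)"
proof -
  assume r: "r > 0"
  have "((\<lambda>x. 1 / x ^ 2) has_integral 1 / (real (2 - 1) * r ^ (2 - 1))) {r..}"
    by (rule has_integral_inverse_power_to_inf) (use r in auto)
  then have h: "((\<lambda>x. 1 / x ^ 2) has_integral 1 / r) {r..}" by simp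
  show ?thesis by (rule nn_integral_has_integral_lebesgue'[OF _ h]) simp
qed

lemma inv_sq_tail_neg: "r > 0 \<Longrightarrow> (\<integral>\<^sup>+s. ennreal (1 / s ^ 2) * indicator {..-r} s \<partial>lborel) = ennreal (1 / r)"
proof -
  assume r: "r > 0"
  have "(\<integral>\<^sup>+s. ennreal (1 / s ^ 2) * indicator {..-r} s \<partial>lborel) =
      ennreal \<bar>- 1\<bar> * (\<integral>\<^sup>+s. ennreal (1 / (0 + - 1 * s) ^ 2) * indicator {..-r} (0 + - 1 * s) \<partial>lborel)"
    by (rule nn_integral_real_affine) auto
  also have "(\<integral>\<^sup>+s. ennreal (1 / (0 + - 1 * s) ^ 2) * indicator {..-r} (0 + - 1 * s) \<partial>lborel) = (\<integral>\<^sup>+s. ennreal (1 / s ^ 2) * indicator {r..} s \<partial>lborel)"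
    by (intro nn_integral_cong) (auto simp: indicator_def)
  finally show ?thesis using inv_sq_tail[OF r] by simp
qed

lemma om_tail:
  assumes "r \<ge> 1"
  shows "(\<integral>\<^sup>+s. ennreal (om s) * indicator {s. r \<le> \<bar>s\<bar>} s \<partial>lborel) \<le> ennreal (2 / r)"
proof -
  have "(\<integral>\<^sup>+s. ennreal (om s) * indicator {s. r \<le> \<bar>s\<bar>} s \<partial>lborel) \<le>
      (\<integral>\<^sup>+s. ennreal (1 / s ^ 2) * indicator {r..} s + ennreal (1 / s ^ 2) * indicator {..-r} s \<partial>lborel)"
  proof (intro nn_integral_mono)
    fix s :: real
    show "ennreal (om s) * indicator {s. r \<le> \<bar>s\<bar>} s \<le> ennreal (1 / s ^ 2) * indicator {r..} s + ennreal (1 / s ^ 2) * indicator {..-r} s"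
    proof (cases "r \<le> \<bar>s\<bar>")
      case True
      have "om s \<le> 1 / s^2"
      proof (cases "\<bar>s\<bar> \<le> 1")
        case True
        then have "\<bar>s\<bar> = 1" using \<open>r \<le> \<bar>s\<bar>\<close> assms by simp
        then have "s^2 = 1" by (metis abs_power2 one_power2 power2_abs)
        then show ?thesis using True by (simp add: om_def)
      qed (simp add: om_def)
      then show ?thesis using True assms by (auto simp: indicator_def abs_if ennreal_leI split: if_splits)
    qed (simp add: indicator_def)
  qed
  also have "\<dots> = (\<integral>\<^sup>+s. ennreal (1 / s ^ 2) * indicator {r..} s \<partial>lborel) + (\<integral>\<^sup>+s. ennreal (1 / s ^ 2) * indicator {..-r} s \<partial>lborel)"
    by (rule nn_integral_add) auto
  also have "\<dots> = ennreal (2 / r)" using inv_sq_tail inv_sq_tail_neg assms by (simp flip: ennreal_plus)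
  finally show ?thesis .
qed

lemma enn3: "0 \<le> A \<Longrightarrow> 0 \<le> B \<Longrightarrow> 0 \<le> (C::real) \<Longrightarrow> ennreal (A * B * C) = ennreal A * ennreal B * ennreal C"
  by (metis ennreal_mult mult_nonneg_nonneg)

lemma ind_m11: "(\<integral>\<^sup>+s. indicator {-1..1::real} s \<partial>lborel) = 2"
proof -
  have "(\<integral>\<^sup>+s. indicator {-1..1::real} s \<partial>lborel) = emeasure lborel {-1..1::real}" by simp
  also have "\<dots> = ennreal 2" by simp
  finally show ?thesis by simp
qed

lemma om_total: "(\<integral>\<^sup>+s. ennreal (om s) \<partial>lborel) \<le> 4"
proof -
  have "(\<integral>\<^sup>+s. ennreal (om s) \<partial>lborel) \<le> (\<integral>\<^sup>+s. indicator {-1..1} s + ennreal (om s) * indicator {s. 1 \<le> \<bar>s\<bar>} s \<partial>lborel)"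
    by (intro nn_integral_mono) (auto simp: indicator_def om_def)
  also have "\<dots> = (\<integral>\<^sup>+s. indicator {-1..1::real} s \<partial>lborel) + (\<integral>\<^sup>+s. ennreal (om s) * indicator {s. 1 \<le> \<bar>s\<bar>} s \<partial>lborel)"
  proof -
    have m1: "(\<lambda>s. indicator {-1..1::real} s :: ennreal) \<in> borel_measurable lborel" by measurable
    have m2: "(\<lambda>s. ennreal (om s) * indicator {s. 1 \<le> \<bar>s\<bar>} s) \<in> borel_measurable lborel" by measurable
    show ?thesis by (rule nn_integral_add[OF m1 m2])
  qed
  also have "\<dots> \<le> 2 + ennreal (2 / 1)"
    unfolding ind_m11 by (intro add_mono om_tail) auto
  finally show ?thesis by simp
qed

lemma om_shift: "(\<integral>\<^sup>+s. f (s - c) \<partial>lborel) = (\<integral>\<^sup>+s. f s \<partial>lborel)" if [measurable]: "f \<in> borel_measurable borel" for f :: "real \<Rightarrow> ennreal"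
proof -
  have "(\<integral>\<^sup>+s. f s \<partial>lborel) = ennreal \<bar>1\<bar> * (\<integral>\<^sup>+s. f (c + 1 * s) \<partial>lborel)"
    by (rule nn_integral_real_affine) auto
  moreover have "(\<integral>\<^sup>+s. f (s - c) \<partial>lborel) = ennreal \<bar>1\<bar> * (\<integral>\<^sup>+s. f ((c + 1 * s) - c) \<partial>lborel)"
    by (rule nn_integral_real_affine) auto
  ultimately show ?thesis by (simp add: add.commute)
qed

lemma tail_prod:
  fixes y v :: "real^'n"
  assumes v: "\<And>b. b \<in> Basis \<Longrightarrow> v \<bullet> b = r" and r: "r \<ge> 1"
  shows "(\<integral>\<^sup>+x. ennreal (indicator (- box (y - v) (y + v)) x * (\<Prod>b\<in>Basis. om ((x - y) \<bullet> b))) \<partial>lborel)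
     \<le> ennreal (real DIM(real^'n) * (2 / r) * 4 ^ (DIM(real^'n) - 1))"
proof -
  define g where "g b0 b s = ennreal (om (s - y \<bullet> b)) * (if b = b0 then indicator {s. r \<le> \<bar>s - y \<bullet> b\<bar>} s else 1)"
    for b0 b :: "real^'n" and s :: real
  have gm[measurable]: "g b0 b \<in> borel_measurable borel" for b0 b
    unfolding g_def by measurable
  have pw: "ennreal (indicator (- box (y - v) (y + v)) x * (\<Prod>b\<in>Basis. om ((x - y) \<bullet> b))) \<le>
      (\<Sum>b0\<in>Basis. \<Prod>b\<in>Basis. g b0 b (x \<bullet> b))" for x
  proof (cases "x \<in> box (y - v) (y + v)")
    case True
    then show ?thesis by simp
  next
    case False
    then obtain b0 where b0: "b0 \<in> Basis" "\<not> ((y - v) \<bullet> b0 < x \<bullet> b0 \<and> x \<bullet> b0 < (y + v) \<bullet> b0)"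
      unfolding mem_box by blast
    then have ab: "r \<le> \<bar>x \<bullet> b0 - y \<bullet> b0\<bar>" using v[OF b0(1)] by (auto simp: inner_diff_left inner_add_left)
    have "(\<Prod>b\<in>Basis. g b0 b (x \<bullet> b)) = (\<Prod>b\<in>Basis. ennreal (om ((x - y) \<bullet> b)))"
      by (intro prod.cong refl) (auto simp: g_def ab inner_diff_left)
    also have "\<dots> = ennreal (\<Prod>b\<in>Basis. om ((x - y) \<bullet> b))"
      by (rule prod_ennreal) (simp add: om_pos less_imp_le)
    finally have e: "ennreal (indicator (- box (y - v) (y + v)) x * (\<Prod>b\<in>Basis. om ((x - y) \<bullet> b))) = (\<Prod>b\<in>Basis. g b0 b (x \<bullet> b))"
      using False by simp
    show ?thesis unfolding e by (rule member_le_sum) (use b0 in auto)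
  qed
  have "(\<integral>\<^sup>+x. ennreal (indicator (- box (y - v) (y + v)) x * (\<Prod>b\<in>Basis. om ((x - y) \<bullet> b))) \<partial>lborel)
      \<le> (\<integral>\<^sup>+x. (\<Sum>b0\<in>Basis. \<Prod>b\<in>Basis. g b0 b (x \<bullet> b)) \<partial>lborel)"
    by (intro nn_integral_mono pw)
  also have "\<dots> = (\<Sum>b0\<in>Basis. \<integral>\<^sup>+x. (\<Prod>b\<in>Basis. g b0 b (x \<bullet> b)) \<partial>lborel)"
    by (rule nn_integral_sum) auto
  also have "\<dots> = (\<Sum>b0\<in>Basis. \<Prod>b\<in>Basis. \<integral>\<^sup>+s. g b0 b s \<partial>lborel)"
    by (intro sum.cong refl nn_integral_lborel_prod) auto
  also have "\<dots> \<le> (\<Sum>b0\<in>(Basis::(real^'n) set). \<Prod>b\<in>Basis. (if b = b0 then ennreal (2 / r) else 4))"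
  proof (intro sum_mono prod_mono_enn)
    fix b0 b :: "real^'n"
    show "(\<integral>\<^sup>+s. g b0 b s \<partial>lborel) \<le> (if b = b0 then ennreal (2 / r) else 4)"
    proof (cases "b = b0")
      case True
      have "(\<integral>\<^sup>+s. g b0 b s \<partial>lborel) = (\<integral>\<^sup>+s. (\<lambda>s. ennreal (om s) * indicator {s. r \<le> \<bar>s\<bar>} s) (s - y \<bullet> b) \<partial>lborel)"
        by (intro nn_integral_cong) (simp add: g_def True indicator_def)
      also have "\<dots> = (\<integral>\<^sup>+s. ennreal (om s) * indicator {s. r \<le> \<bar>s\<bar>} s \<partial>lborel)"
        by (rule om_shift) measurable
      also have "\<dots> \<le> ennreal (2 / r)" by (rule om_tail[OF r])
      finally show ?thesis using True by simp
    next
      case False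
      have "(\<integral>\<^sup>+s. g b0 b s \<partial>lborel) = (\<integral>\<^sup>+s. (\<lambda>s. ennreal (om s)) (s - y \<bullet> b) \<partial>lborel)"
        by (intro nn_integral_cong) (simp add: g_def False)
      also have "\<dots> = (\<integral>\<^sup>+s. ennreal (om s) \<partial>lborel)"
        by (rule om_shift) measurable
      also have "\<dots> \<le> 4" by (rule om_total)
      finally show ?thesis using False by simp
    qed
  qed
  also have "\<dots> = (\<Sum>b0\<in>(Basis::(real^'n) set). ennreal (2 / r) * 4 ^ (DIM(real^'n) - 1))"
  proof (intro sum.cong refl)
    fix b0 :: "real^'n" assume "b0 \<in> Basis"
    then have "(\<Prod>b\<in>Basis. (if b = b0 then ennreal (2 / r) else 4)) =
        ennreal (2 / r) * (\<Prod>b\<in>Basis - {b0}. (if b = b0 then ennreal (2 / r) else 4))"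
      by (subst prod.remove) auto
    also have "(\<Prod>b\<in>(Basis::(real^'n) set) - {b0}. (if b = b0 then ennreal (2 / r) else 4)) = (\<Prod>b\<in>(Basis::(real^'n) set) - {b0}. 4)"
      by (intro prod.cong) auto
    also have "\<dots> = 4 ^ (DIM(real^'n) - 1)" using \<open>b0 \<in> Basis\<close> by (simp add: prod_constant card_Diff_singleton)
    finally show "(\<Prod>b\<in>Basis. (if b = b0 then ennreal (2 / r) else 4)) = ennreal (2 / r) * 4 ^ (DIM(real^'n) - 1)" .
  qed
  also have "\<dots> = of_nat DIM(real^'n) * (ennreal (2 / r) * 4 ^ (DIM(real^'n) - 1))"
    by (simp only: sum_constant)
  also have "\<dots> = ennreal (real DIM(real^'n) * (2 / r) * 4 ^ (DIM(real^'n) - 1))"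
  proof -
    have e1: "ennreal (real DIM(real^'n) * (2 / r) * 4 ^ (DIM(real^'n) - 1)) =
        ennreal (real DIM(real^'n)) * ennreal (2 / r) * ennreal (4 ^ (DIM(real^'n) - 1))"
      using r by (intro enn3) auto
    have e2: "ennreal (4 ^ (DIM(real^'n) - 1)) = 4 ^ (DIM(real^'n) - 1)"
      using ennreal_power[of 4 "DIM(real^'n) - 1"] by simp
    show ?thesis unfolding e1 e2 by (simp add: ennreal_of_nat_eq_real_of_nat mult.assoc)
  qed
  finally show ?thesis .
qed

lemma a_cont:
  assumes "pfun (\<lambda>z::real \<times> (real^'n). a (snd z))"
  shows "continuous_on UNIV a"
proof -
  have "continuous_on UNIV (\<lambda>\<xi>::real^'n. (\<lambda>z::real \<times> (real^'n). a (snd z)) (0, \<xi>))"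
    by (rule continuous_on_compose2[OF pfun_cont[OF assms]]) (auto intro!: continuous_intros)
  then show ?thesis by simp
qed

lemma lborel_scale_integral:
  fixes f :: "'a::euclidean_space \<Rightarrow> complex"
  assumes f[measurable]: "f \<in> borel_measurable borel" and c: "c \<noteq> 0"
  shows "(\<integral>x. f x \<partial>lborel) = complex_of_real (\<bar>c\<bar> ^ DIM('a)) * (\<integral>x. f (c *\<^sub>R x) \<partial>lborel)"
proof -
  have "(\<integral>x. f x \<partial>lborel) = (\<integral>x. f x \<partial>density (distr lborel borel (\<lambda>x. 0 + c *\<^sub>R x)) (\<lambda>_. \<bar>c\<bar> ^ DIM('a)))"
    using lborel_affine[OF c, of "0::'a"] by simp
  also have "\<dots> = (\<integral>x. \<bar>c\<bar> ^ DIM('a) *\<^sub>R f x \<partial>distr lborel borel (\<lambda>x. 0 + c *\<^sub>R x))"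
    by (subst integral_density) auto
  also have "\<dots> = (\<integral>x. \<bar>c\<bar> ^ DIM('a) *\<^sub>R f (0 + c *\<^sub>R x) \<partial>lborel)"
    by (subst integral_distr) auto
  also have "\<dots> = complex_of_real (\<bar>c\<bar> ^ DIM('a)) * (\<integral>x. f (c *\<^sub>R x) \<partial>lborel)"
    by (simp add: scaleR_conv_of_real)
  finally show ?thesis .
qed

lemma exists_l_nonzero:
  fixes c :: "('n::finite \<Rightarrow> nat) \<Rightarrow> complex"
  assumes ra: "\<And>\<xi>. Re (hom_symbol m c \<xi>) \<ge> 0" and m: "m > 0" and T: "T \<ge> 0"
  shows "\<exists>l\<ge>1. Vt (hom_symbol m c) l T 0 \<noteq> 0"
proof -
  let ?a = "hom_symbol m c"
  have ac: "continuous_on UNIV ?a" by (rule a_cont[OF hom_symbol_pfun])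
  define g where "g \<eta> = complex_of_real (exp (- (norm \<eta> ^ 2) / 2))" for \<eta> :: "real^'n"
  define s where "s n \<eta> = exp (- complex_of_real (T * inverse (real (Suc n)) ^ m) * ?a \<eta>) * g \<eta>" for n and \<eta> :: "real^'n"
  have gc: "continuous_on UNIV g"
  proof -
    have "g = (\<lambda>\<eta>. complex_of_real (exp ((- 1 / 2) * norm \<eta> ^ 2)))" by (auto simp: g_def fun_eq_iff)
    moreover have "continuous_on UNIV (\<lambda>\<eta>::real^'n. complex_of_real (exp ((- 1 / 2) * norm \<eta> ^ 2)))"
      by (intro continuous_intros)
    ultimately show ?thesis by simp
  qed
  have gm: "g \<in> borel_measurable borel" by (rule borel_measurable_continuous_onI[OF gc])
  have sm: "s n \<in> borel_measurable borel" for n unfolding s_def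
    by (intro borel_measurable_continuous_onI continuous_intros continuous_on_compose2[OF ac] gc) auto
  have gg: "g \<eta> = gauss 1 0 \<eta> * exp (- \<i> * complex_of_real (0 \<bullet> \<eta>))" for \<eta> :: "real^'n"
  proof -
    have "gauss 1 0 \<eta> = exp (complex_of_real (- (norm \<eta> ^ 2) / 2))" by (simp add: gauss_def)
    also have "\<dots> = complex_of_real (exp (- (norm \<eta> ^ 2) / 2))" by (rule exp_of_real)
    finally show ?thesis by (simp add: g_def)
  qed
  have ig: "integrable lborel g" unfolding gg using ft_gauss(1)[of 1 0 "0::real^'n"] by (simp add: inner_commute)
  have gint: "(\<integral>\<eta>. g \<eta> \<partial>lborel) = complex_of_real ((1 * sqrt (2 * pi)) ^ DIM(real^'n))"
    unfolding gg using ft_gauss(2)[of 1 0 "0::real^'n"] by (simp add: inner_commute)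
  have lim: "(\<lambda>n. \<integral>\<eta>. s n \<eta> \<partial>lborel) \<longlonglongrightarrow> (\<integral>\<eta>. g \<eta> \<partial>lborel)"
  proof (rule integral_dominated_convergence[where w="\<lambda>\<eta>. norm (g \<eta>)"])
    show "g \<in> borel_measurable lborel" using gm by simp
    show "s n \<in> borel_measurable lborel" for n using sm by simp
    show "integrable lborel (\<lambda>\<eta>. norm (g \<eta>))" by (rule integrable_norm[OF ig])
    show "AE \<eta> in lborel. (\<lambda>n. s n \<eta>) \<longlonglongrightarrow> g \<eta>"
    proof (rule AE_I2)
      fix \<eta> :: "real^'n"
      have "(\<lambda>n. T * inverse (real (Suc n)) ^ m) \<longlonglongrightarrow> T * 0 ^ m"
        by (intro tendsto_intros LIMSEQ_inverse_real_of_nat)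
      moreover have "T * (0::real) ^ m = 0" using m by simp
      ultimately have "(\<lambda>n. T * inverse (real (Suc n)) ^ m) \<longlonglongrightarrow> 0" by metis
      then have "(\<lambda>n. exp (- complex_of_real (T * inverse (real (Suc n)) ^ m) * ?a \<eta>) * g \<eta>) \<longlonglongrightarrow>
          exp (- complex_of_real 0 * ?a \<eta>) * g \<eta>"
        by (intro tendsto_intros)
      then show "(\<lambda>n. s n \<eta>) \<longlonglongrightarrow> g \<eta>" by (simp add: s_def)
    qed
    show "AE \<eta> in lborel. norm (s n \<eta>) \<le> norm (g \<eta>)" for n
    proof (rule AE_I2)
      fix \<eta> :: "real^'n"
      have "Re (complex_of_real (T * inverse (real (Suc n)) ^ m) * ?a \<eta>) \<ge> 0"
        using ra[of \<eta>] T by simp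
      then have "norm (exp (- complex_of_real (T * inverse (real (Suc n)) ^ m) * ?a \<eta>)) \<le> 1" by simp
      then have "norm (exp (- complex_of_real (T * inverse (real (Suc n)) ^ m) * ?a \<eta>)) * norm (g \<eta>) \<le> 1 * norm (g \<eta>)"
        by (intro mult_right_mono) auto
      then show "norm (s n \<eta>) \<le> norm (g \<eta>)"
        unfolding s_def by (simp add: norm_mult)
    qed
  qed
  have "(\<integral>\<eta>. g \<eta> \<partial>lborel) \<noteq> 0" unfolding gint by simp
  then have "eventually (\<lambda>n. (\<integral>\<eta>. s n \<eta> \<partial>lborel) \<noteq> 0) sequentially"
    by (rule tendsto_imp_eventually_ne[OF lim])
  then obtain n where n: "(\<integral>\<eta>. s n \<eta> \<partial>lborel) \<noteq> 0" by (auto dest: eventually_happens)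
  define l where "l = real (Suc n)"
  have l: "l \<ge> 1" by (simp add: l_def)
  have Gm: "Gt ?a l T \<in> borel_measurable borel"
    by (rule borel_measurable_continuous_onI[OF Gt_cont[OF hom_symbol_pfun]])
  have "Vt ?a l T 0 = (\<integral>\<xi>. Gt ?a l T \<xi> \<partial>lborel)" by (simp add: Vt_def)
  also have "\<dots> = complex_of_real (\<bar>inverse l\<bar> ^ DIM(real^'n)) * (\<integral>\<xi>. Gt ?a l T (inverse l *\<^sub>R \<xi>) \<partial>lborel)"
    by (rule lborel_scale_integral[OF Gm]) (use l in simp)
  also have "(\<lambda>\<xi>. Gt ?a l T (inverse l *\<^sub>R \<xi>)) = s n"
  proof
    fix \<xi> :: "real^'n"
    have "?a (inverse l *\<^sub>R \<xi>) = complex_of_real (inverse l ^ m) * ?a \<xi>" by (rule hom_symbol_hom)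
    moreover have "l^2 * norm (inverse l *\<^sub>R \<xi>) ^ 2 = norm \<xi> ^ 2"
      using l by (simp add: power_mult_distrib power_inverse field_simps)
    ultimately show "Gt ?a l T (inverse l *\<^sub>R \<xi>) = s n \<xi>"
      by (simp add: Gt_def s_def g_def l_def mult.assoc)
  qed
  finally have "Vt ?a l T 0 = complex_of_real (\<bar>inverse l\<bar> ^ DIM(real^'n)) * (\<integral>\<eta>. s n \<eta> \<partial>lborel)" .
  then have "Vt ?a l T 0 \<noteq> 0" using n l by simp
  then show ?thesis using l by blast
qed

lemma expi_diff_bound: "cmod (exp (\<i> * complex_of_real x) - 1) \<le> \<bar>x\<bar>"
proof -
  let ?f = "\<lambda>s. exp (\<i> * complex_of_real (s * x))"
  have d: "(?f has_vector_derivative (\<i> * complex_of_real x) * ?f s) (at s)" for s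
  proof -
    have "((\<lambda>s. \<i> * complex_of_real (s * x)) has_vector_derivative \<i> * complex_of_real x) (at s)"
    proof -
      have "((\<lambda>s. complex_of_real (s * x)) has_vector_derivative complex_of_real x) (at s)"
        by (rule has_vector_derivative_of_real) (auto intro!: derivative_eq_intros)
      then show ?thesis
        using has_vector_derivative_mult[OF has_vector_derivative_const[of \<i>], of "\<lambda>s. complex_of_real (s * x)"] by simp
    qed
    then show ?thesis by (rule vd_exp)
  qed
  have "cmod (?f 1 - ?f 0) \<le> \<bar>x\<bar> * (1 - 0)"
    by (rule mvt_vec[OF d]) (auto simp: norm_mult)
  then show ?thesis by simp
qed

lemma integrable_norm_gauss_weight:
  assumes l: "l > 0"
  shows "integrable lborel (\<lambda>\<xi>::real^'n. norm \<xi> * cmod (gauss (1 / l) 0 \<xi>))"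
proof -
  obtain M where M: "\<And>s. s \<ge> 0 \<Longrightarrow> (1 + s) ^ 1 * exp (- (l^2/4) * s) \<le> M"
    using poly_exp_bound[of "l^2/4" 1] l by auto
  have i2: "integrable lborel (\<lambda>\<xi>::real^'n. M * cmod (gauss (sqrt 2 / l) 0 \<xi>))"
    by (intro integrable_mult_right integrable_norm integrable_gauss) (use l in simp)
  have me: "(\<lambda>\<xi>::real^'n. norm \<xi> * cmod (gauss (1 / l) 0 \<xi>)) \<in> borel_measurable lborel"
  proof -
    have "continuous_on UNIV (\<lambda>\<xi>::real^'n. norm \<xi> * cmod (gauss (1 / l) 0 \<xi>))"
      by (intro continuous_intros continuous_on_norm gauss_cont[THEN continuous_on_subset]) auto
    then show ?thesis
      using borel_measurable_continuous_onI by simp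
  qed
  have bd: "norm (norm \<xi> * cmod (gauss (1 / l) 0 \<xi>)) \<le> norm (M * cmod (gauss (sqrt 2 / l) 0 \<xi>))" for \<xi> :: "real^'n"
  proof -
      define s where "s = norm \<xi> ^ 2"
      have s0: "s \<ge> 0" by (simp add: s_def)
      have n1: "norm \<xi> \<le> 1 + s"
      proof -
        have "2 * norm \<xi> \<le> 1 + norm \<xi> ^ 2"
          using sum_squares_ge_zero[of "norm \<xi> - 1" 0] by (simp add: power2_eq_square algebra_simps)
        then show ?thesis unfolding s_def using norm_ge_zero[of \<xi>] by linarith
      qed
      have g1: "cmod (gauss (1 / l) 0 \<xi>) = exp (- (l^2/4) * s) * exp (- (l^2/4) * s)"
        using l by (simp add: norm_gauss s_def power_divide exp_add[symmetric] field_simps)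
      have g2: "cmod (gauss (sqrt 2 / l) 0 \<xi>) = exp (- (l^2/4) * s)"
        using l by (simp add: norm_gauss s_def power_divide field_simps)
      have "norm \<xi> * cmod (gauss (1 / l) 0 \<xi>) \<le> ((1 + s) ^ 1 * exp (- (l^2/4) * s)) * exp (- (l^2/4) * s)"
        unfolding g1 using n1 by (simp add: mult.assoc mult_right_mono)
      also have "\<dots> \<le> M * exp (- (l^2/4) * s)" by (intro mult_right_mono M s0) simp
      finally show "norm (norm \<xi> * cmod (gauss (1 / l) 0 \<xi>)) \<le> norm (M * cmod (gauss (sqrt 2 / l) 0 \<xi>))"
        unfolding g2 by simp
  qed
  show ?thesis by (rule Bochner_Integration.integrable_bound[OF i2 me]) (use bd in auto)
qed

lemma Vt_lip:
  fixes a :: "real^'n \<Rightarrow> complex"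
  assumes pa: "pfun (\<lambda>z::real \<times> (real^'n). a (snd z))" and ra: "\<And>\<xi>. Re (a \<xi>) \<ge> 0"
    and l: "l > 0" and t: "t \<ge> 0"
  shows "\<exists>\<Lambda>\<ge>0. \<forall>w. cmod (Vt a l t w - Vt a l t 0) \<le> \<Lambda> * norm w"
proof -
  define \<Lambda> where "\<Lambda> = (\<integral>\<xi>. norm \<xi> * cmod (gauss (1 / l) (0::real^'n) \<xi>) \<partial>lborel)"
  have \<Lambda>0: "\<Lambda> \<ge> 0" unfolding \<Lambda>_def by (intro integral_nonneg_AE) auto
  have iG: "integrable lborel (Gt a l t)" by (rule Gt_integrable[OF pa ra t l])
  have "cmod (Vt a l t w - Vt a l t 0) \<le> \<Lambda> * norm w" for w
  proof -
    have "Vt a l t w - Vt a l t 0 = (\<integral>\<xi>. Gt a l t \<xi> * exp (\<i> * complex_of_real (\<xi> \<bullet> w)) - Gt a l t \<xi> * exp (\<i> * complex_of_real (\<xi> \<bullet> 0)) \<partial>lborel)"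
      unfolding Vt_def using Bochner_Integration.integral_diff[OF integrable_mult_expi[OF iG, of w] integrable_mult_expi[OF iG, of 0]] by simp
    also have "cmod \<dots> \<le> (\<integral>\<xi>. norm (Gt a l t \<xi> * exp (\<i> * complex_of_real (\<xi> \<bullet> w)) - Gt a l t \<xi> * exp (\<i> * complex_of_real (\<xi> \<bullet> 0))) \<partial>lborel)"
      by (rule integral_norm_bound)
    also have "\<dots> \<le> (\<integral>\<xi>. norm w * (norm \<xi> * cmod (gauss (1 / l) (0::real^'n) \<xi>)) \<partial>lborel)"
    proof (rule integral_mono)
      show "integrable lborel (\<lambda>\<xi>. norm (Gt a l t \<xi> * exp (\<i> * complex_of_real (\<xi> \<bullet> w)) - Gt a l t \<xi> * exp (\<i> * complex_of_real (\<xi> \<bullet> 0))))"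
        by (intro integrable_norm Bochner_Integration.integrable_diff integrable_mult_expi iG)
      show "integrable lborel (\<lambda>\<xi>. norm w * (norm \<xi> * cmod (gauss (1 / l) (0::real^'n) \<xi>)))"
        by (intro integrable_mult_right integrable_norm_gauss_weight l)
      fix \<xi> :: "real^'n"
      have "norm (Gt a l t \<xi> * exp (\<i> * complex_of_real (\<xi> \<bullet> w)) - Gt a l t \<xi> * exp (\<i> * complex_of_real (\<xi> \<bullet> 0)))
          = cmod (Gt a l t \<xi>) * cmod (exp (\<i> * complex_of_real (\<xi> \<bullet> w)) - 1)"
      proof -
        have "Gt a l t \<xi> * exp (\<i> * complex_of_real (\<xi> \<bullet> w)) - Gt a l t \<xi> * exp (\<i> * complex_of_real (\<xi> \<bullet> 0))
            = Gt a l t \<xi> * (exp (\<i> * complex_of_real (\<xi> \<bullet> w)) - 1)"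
          by (simp add: right_diff_distrib)
        then show ?thesis by (simp only: norm_mult)
      qed
      also have "\<dots> \<le> cmod (gauss (1 / l) 0 \<xi>) * (norm \<xi> * norm w)"
      proof (intro mult_mono norm_Gt ra t l)
        have "cmod (exp (\<i> * complex_of_real (\<xi> \<bullet> w)) - 1) \<le> \<bar>\<xi> \<bullet> w\<bar>" by (rule expi_diff_bound)
        also have "\<dots> \<le> norm \<xi> * norm w" by (rule Cauchy_Schwarz_ineq2)
        finally show "cmod (exp (\<i> * complex_of_real (\<xi> \<bullet> w)) - 1) \<le> norm \<xi> * norm w" .
      qed auto
      finally show "norm (Gt a l t \<xi> * exp (\<i> * complex_of_real (\<xi> \<bullet> w)) - Gt a l t \<xi> * exp (\<i> * complex_of_real (\<xi> \<bullet> 0)))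
          \<le> norm w * (norm \<xi> * cmod (gauss (1 / l) 0 \<xi>))" by (simp add: mult_ac)
    qed
    also have "\<dots> = \<Lambda> * norm w" unfolding \<Lambda>_def by simp
    finally show ?thesis .
  qed
  then show ?thesis using \<Lambda>0 by blast
qed

lemma int_le_from_nn:
  fixes g :: "'a \<Rightarrow> real"
  assumes "\<And>x. 0 \<le> g x" "(\<integral>\<^sup>+x. ennreal (g x) \<partial>M) \<le> ennreal B" "0 \<le> B"
  shows "(\<integral>x. g x \<partial>M) \<le> B"
proof (cases "integrable M g")
  case True
  have "(\<integral>\<^sup>+x. ennreal (g x) \<partial>M) = ennreal (\<integral>x. g x \<partial>M)"
    by (rule nn_integral_eq_integral[OF True]) (use assms(1) in auto)
  then show ?thesis using assms(2,3) by (simp add: ennreal_le_iff2 del: ennreal_le_iff) (metis ennreal_le_iff)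
next
  case False
  then show ?thesis using assms(3) by (simp add: not_integrable_integral_eq)
qed

lemma Lr_bound:
  fixes r :: ereal
  assumes r: "1 \<le> r" and T: "0 < T" and G: "0 \<le> G" and g: "\<And>t. t \<in> {0<..<T} \<Longrightarrow> 0 \<le> g t \<and> g t \<le> G"
  shows "Lr_time_norm r T g \<le> max 1 T * G"
proof (cases "r = \<infinity>")
  case True
  let ?M = "restrict_space lborel {0<..<T}"
  have "real_of_ereal (esssup ?M (\<lambda>t. ereal (g t))) \<le> G"
  proof (cases "(\<lambda>t. ereal (g t)) \<in> borel_measurable ?M")
    case True
    have "AE t in ?M. ereal (g t) \<le> ereal G"
      by (subst AE_restrict_space_iff) (auto intro!: AE_I2 simp: g)
    then have le: "esssup ?M (\<lambda>t. ereal (g t)) \<le> ereal G" by (rule esssup_I[OF True])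
    show ?thesis
    proof (cases "esssup ?M (\<lambda>t. ereal (g t))")
      case (real x)
      then show ?thesis using le by simp
    next
      case PInf
      then show ?thesis using le by simp
    next
      case MInf
      then show ?thesis using G by simp
    qed
  next
    case False
    then show ?thesis using G by (simp add: esssup_non_measurable top_ereal_def)
  qed
  moreover have "G \<le> max 1 T * G" using G by (simp add: mult_le_cancel_right1)
  ultimately show ?thesis using True by (simp add: Lr_time_norm_def)
next
  case False
  then obtain r' where r': "r = ereal r'" "r' \<ge> 1" using r by (cases r) auto
  let ?X = "(\<integral>t\<in>{0<..<T}. g t powr r' \<partial>lborel)"
  have X0: "?X \<ge> 0"
    unfolding set_lebesgue_integral_def by (intro integral_nonneg_AE AE_I2) (auto simp: indicator_def)
  have Xle: "?X \<le> G powr r' * T"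
    unfolding set_lebesgue_integral_def
  proof (rule int_le_from_nn)
    show "0 \<le> indicator {0<..<T} t *\<^sub>R g t powr r'" for t by (simp add: indicator_def)
    have "(\<integral>\<^sup>+t. ennreal (indicator {0<..<T} t *\<^sub>R g t powr r') \<partial>lborel) \<le> (\<integral>\<^sup>+t. ennreal (G powr r') * indicator {0<..<T} t \<partial>lborel)"
    proof (intro nn_integral_mono)
      fix t :: real
      show "ennreal (indicator {0<..<T} t *\<^sub>R g t powr r') \<le> ennreal (G powr r') * indicator {0<..<T} t"
      proof (cases "t \<in> {0<..<T}")
        case True
        then have "g t powr r' \<le> G powr r'" using g[OF True] r' by (intro powr_mono2) auto
        then show ?thesis using True by (simp add: ennreal_leI)
      qed simp
    qed
    also have "\<dots> = ennreal (G powr r') * emeasure lborel {0<..<T}" by (simp add: nn_integral_cmult_indicator)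
    also have "\<dots> = ennreal (G powr r' * T)" using T by (simp add: ennreal_mult)
    finally show "(\<integral>\<^sup>+t. ennreal (indicator {0<..<T} t *\<^sub>R g t powr r') \<partial>lborel) \<le> ennreal (G powr r' * T)" .
    show "0 \<le> G powr r' * T" using T by simp
  qed
  have "?X powr (1 / r') \<le> (G powr r' * T) powr (1 / r')"
    by (intro powr_mono2 X0 Xle) (use r' in simp)
  also have "\<dots> = G * T powr (1 / r')"
    using G T r' by (simp add: powr_mult powr_powr)
  also have "\<dots> \<le> G * max 1 T"
  proof (intro mult_left_mono G)
    show "T powr (1 / r') \<le> max 1 T"
    proof (cases "T \<le> 1")
      case True
      then have "T powr (1 / r') \<le> 1" using powr_mono2[of "1/r'" T 1] T r' by simp
      then show ?thesis by simp
    next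
      case False
      then have "T powr (1 / r') \<le> T powr 1" using r' by (intro powr_mono) auto
      then show ?thesis using T by simp
    qed
  qed
  finally show ?thesis using r' by (simp add: Lr_time_norm_def mult.commute)
qed

lemma E_bound:
  fixes f :: "real^'n \<Rightarrow> complex" and y v :: "real^'n"
  assumes E: "E \<in> sets lebesgue" and p: "p \<ge> 1"
    and v: "\<And>b. b \<in> Basis \<Longrightarrow> v \<bullet> b = r" and r: "r \<ge> 1"
    and C1: "C1 \<ge> 0" "\<And>x. cmod (f x) \<le> C1"
    and C2: "C2 \<ge> 0" "\<And>x. cmod (f x) \<le> C2 * (\<Prod>b\<in>Basis. om ((x - y) \<bullet> b))"
  shows "(\<integral>x\<in>E. cmod (f x) powr p \<partial>lebesgue) \<le>
     C1 powr p * measure lebesgue (E \<inter> box (y - v) (y + v)) + C2 powr p * (real DIM(real^'n) * (2 / r) * 4 ^ (DIM(real^'n) - 1))"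
proof -
  let ?B = "box (y - v) (y + v)"
  let ?W = "\<lambda>x. indicator (- ?B) x * (\<Prod>b\<in>Basis. om ((x - y) \<bullet> b))"
  let ?tv = "real DIM(real^'n) * (2 / r) * 4 ^ (DIM(real^'n) - 1)"
  have EB: "E \<inter> ?B \<in> sets lebesgue" by (intro sets.Int E fmeasurableD lmeasurable_box)
  have EBf: "E \<inter> ?B \<in> lmeasurable"
    by (rule bounded_set_imp_lmeasurable[OF _ EB]) (auto intro: bounded_subset[OF bounded_box])
  have Wm: "?W \<in> borel_measurable borel" by measurable
  have pr_le: "(\<Prod>b\<in>Basis. om ((x - y) \<bullet> b)) powr p \<le> (\<Prod>b\<in>Basis. om ((x - y) \<bullet> b))" for x
  proof (rule powr_le_one_le)
    show "0 < (\<Prod>b\<in>Basis. om ((x - y) \<bullet> b))" by (intro prod_pos) (simp add: om_pos)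
    show "(\<Prod>b\<in>Basis. om ((x - y) \<bullet> b)) \<le> 1" by (intro prod_le_1) (auto simp: om_le1 om_pos less_imp_le)
  qed (use p in simp)
  have pw: "ennreal (indicator E x *\<^sub>R cmod (f x) powr p) \<le>
      ennreal (C1 powr p) * indicator (E \<inter> ?B) x + ennreal (C2 powr p) * ennreal (?W x)" for x
  proof (cases "x \<in> ?B")
    case True
    show ?thesis
    proof (cases "x \<in> E")
      case True
      have "cmod (f x) powr p \<le> C1 powr p" using C1 p by (intro powr_mono2) auto
      then show ?thesis using True \<open>x \<in> ?B\<close> by (simp add: ennreal_leI add_increasing2)
    qed simp
  next
    case False
    have "cmod (f x) powr p \<le> (C2 * (\<Prod>b\<in>Basis. om ((x - y) \<bullet> b))) powr p"
      using C2 p by (intro powr_mono2) auto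
    also have "\<dots> = C2 powr p * (\<Prod>b\<in>Basis. om ((x - y) \<bullet> b)) powr p"
      using C2(1) by (intro powr_mult prod_nonneg; simp add: om_pos less_imp_le)
    also have "\<dots> \<le> C2 powr p * (\<Prod>b\<in>Basis. om ((x - y) \<bullet> b))"
      by (intro mult_left_mono pr_le) simp
    finally have "cmod (f x) powr p \<le> C2 powr p * (\<Prod>b\<in>Basis. om ((x - y) \<bullet> b))" .
    then have "indicator E x *\<^sub>R cmod (f x) powr p \<le> C2 powr p * ?W x"
    proof -
      have pn: "0 \<le> (\<Prod>b\<in>Basis. om ((x - y) \<bullet> b))" by (intro prod_nonneg) (simp add: om_pos less_imp_le)
      show ?thesis using False pn \<open>cmod (f x) powr p \<le> C2 powr p * (\<Prod>b\<in>Basis. om ((x - y) \<bullet> b))\<close>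
        by (cases "x \<in> E") (auto simp: indicator_def)
    qed
    then have "ennreal (indicator E x *\<^sub>R cmod (f x) powr p) \<le> ennreal (C2 powr p) * ennreal (?W x)"
      by (simp add: ennreal_mult'[symmetric] ennreal_leI)
    then show ?thesis by (simp add: add_increasing)
  qed
  have "(\<integral>\<^sup>+x. ennreal (indicator E x *\<^sub>R cmod (f x) powr p) \<partial>lebesgue) \<le>
      (\<integral>\<^sup>+x. ennreal (C1 powr p) * indicator (E \<inter> ?B) x + ennreal (C2 powr p) * ennreal (?W x) \<partial>lebesgue)"
    by (intro nn_integral_mono pw)
  also have "\<dots> = (\<integral>\<^sup>+x. ennreal (C1 powr p) * indicator (E \<inter> ?B) x \<partial>lebesgue) + (\<integral>\<^sup>+x. ennreal (C2 powr p) * ennreal (?W x) \<partial>lebesgue)"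
  proof (rule nn_integral_add)
    show "(\<lambda>x. ennreal (C1 powr p) * indicator (E \<inter> ?B) x) \<in> borel_measurable lebesgue"
      using EB by measurable
    show "(\<lambda>x. ennreal (C2 powr p) * ennreal (?W x)) \<in> borel_measurable lebesgue"
      by (intro borel_measurable_times_ennreal measurable_completion) (use Wm in auto)
  qed
  also have "(\<integral>\<^sup>+x. ennreal (C1 powr p) * indicator (E \<inter> ?B) x \<partial>lebesgue) = ennreal (C1 powr p) * emeasure lebesgue (E \<inter> ?B)"
    using EB by (simp add: nn_integral_cmult_indicator)
  also have "emeasure lebesgue (E \<inter> ?B) = ennreal (measure lebesgue (E \<inter> ?B))"
    using EBf by (simp add: emeasure_eq_measure2)
  also have "(\<integral>\<^sup>+x. ennreal (C2 powr p) * ennreal (?W x) \<partial>lebesgue) = ennreal (C2 powr p) * (\<integral>\<^sup>+x. ennreal (?W x) \<partial>lborel)"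
  proof -
    have "(\<integral>\<^sup>+x. ennreal (C2 powr p) * ennreal (?W x) \<partial>lebesgue) = ennreal (C2 powr p) * (\<integral>\<^sup>+x. ennreal (?W x) \<partial>lebesgue)"
      by (rule nn_integral_cmult) (intro measurable_completion, use Wm in auto)
    also have "(\<integral>\<^sup>+x. ennreal (?W x) \<partial>lebesgue) = (\<integral>\<^sup>+x. ennreal (?W x) \<partial>lborel)"
      by (rule nn_integral_completion)
    finally show ?thesis .
  qed
  also have "ennreal (C2 powr p) * (\<integral>\<^sup>+x. ennreal (?W x) \<partial>lborel) \<le> ennreal (C2 powr p) * ennreal ?tv"
    by (intro mult_left_mono tail_prod[OF v r]) auto
  finally have nn: "(\<integral>\<^sup>+x. ennreal (indicator E x *\<^sub>R cmod (f x) powr p) \<partial>lebesgue) \<le>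
      ennreal (C1 powr p * measure lebesgue (E \<inter> ?B) + C2 powr p * ?tv)"
    using r by (simp add: ennreal_mult'[symmetric] ennreal_plus[symmetric] del: ennreal_plus)
  show ?thesis unfolding set_lebesgue_integral_def
    by (rule int_le_from_nn[OF _ nn]) (use r in \<open>auto simp: indicator_def\<close>)
qed

lemma lhs_lower:
  fixes f :: "real^'n \<Rightarrow> complex" and y :: "real^'n"
  assumes int: "integrable lebesgue (\<lambda>x. cmod (f x) powr p)" and p: "p > 0" and d: "\<delta> > 0"
    and c1: "c1 \<ge> 0" and near: "\<And>x. norm (x - y) < \<delta> \<Longrightarrow> c1 \<le> cmod (f x)"
  shows "(c1 powr p * (unit_ball_vol (real CARD('n)) * \<delta> ^ CARD('n))) powr (1 / p) \<le> Lp_norm p f"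
proof -
  have bl: "ball y \<delta> \<in> lmeasurable" by (rule lmeasurable_ball)
  have mb: "measure lebesgue (ball y \<delta>) = unit_ball_vol (real CARD('n)) * \<delta> ^ CARD('n)"
  proof -
    have "measure lebesgue (ball y \<delta>) = measure lborel (ball y \<delta>)" by simp
    also have "\<dots> = unit_ball_vol (real CARD('n)) * \<delta> ^ CARD('n)"
      using emeasure_ball[of \<delta> y] d by (simp add: measure_def)
    finally show ?thesis .
  qed
  have "c1 powr p * measure lebesgue (ball y \<delta>) = (\<integral>x. indicator (ball y \<delta>) x * c1 powr p \<partial>lebesgue)"
    by simp
  also have "\<dots> \<le> (\<integral>x. cmod (f x) powr p \<partial>lebesgue)"
  proof (rule integral_mono)
    show "integrable lebesgue (\<lambda>x. indicator (ball y \<delta>) x * c1 powr p :: real)"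
      using bl by (intro integrable_mult_left integrable_real_indicator) (auto simp: fmeasurable_def)
    show "integrable lebesgue (\<lambda>x. cmod (f x) powr p)" by (rule int)
    fix x :: "real^'n"
    show "indicator (ball y \<delta>) x * c1 powr p \<le> cmod (f x) powr p"
    proof (cases "x \<in> ball y \<delta>")
      case True
      then have "norm (x - y) < \<delta>" by (simp add: dist_norm norm_minus_commute)
      then have "c1 powr p \<le> cmod (f x) powr p" using near c1 p by (intro powr_mono2) auto
      then show ?thesis using True by simp
    qed simp
  qed
  finally have "c1 powr p * (unit_ball_vol (real CARD('n)) * \<delta> ^ CARD('n)) \<le> (\<integral>x. cmod (f x) powr p \<partial>lebesgue)"
    unfolding mb .
  then show ?thesis unfolding Lp_norm_def
    by (intro powr_mono2) (use p c1 d in \<open>auto intro!: mult_nonneg_nonneg\<close>)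
qed

theorem theorem3p4:
  fixes p :: real and r :: ereal and m :: nat
    and c :: "('n::finite \<Rightarrow> nat) \<Rightarrow> complex"
    and S :: "real \<Rightarrow> (real^'n \<Rightarrow> complex) \<Rightarrow> real^'n \<Rightarrow> complex"
    and E :: "(real^'n) set" and T :: real and C_obs :: real
  assumes "1 < p"
    and "1 \<le> r"
    and "2 \<le> m"
    and "strongly_elliptic m c"
    and "is_elliptic_semigroup p (hom_symbol m c) S"
    and "E \<in> sets lebesgue"
    and "0 < T"
    and "0 < C_obs"
    and "\<forall>x0. in_Lp p x0 \<longrightarrow>
           Lp_norm p (S T x0) \<le> C_obs * Lr_time_norm r T (\<lambda>t. Lp_norm_on p E (S t x0))"
  shows "thick E"
proof (rule ccontr)
  assume nt: "\<not> thick E"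
  let ?a = "hom_symbol m c"
  let ?d = "CARD('n)"
  have p: "p > 0" "p \<ge> 1" using assms(1) by auto
  have T: "T > 0" "T \<ge> 0" using assms(7) by auto
  have ra: "\<And>\<xi>. Re (?a \<xi>) \<ge> 0" by (rule strongly_elliptic_Re[OF assms(4)])
  have pa: "pfun (\<lambda>z::real \<times> (real^'n). ?a (snd z))" by (rule hom_symbol_pfun)
  have m0: "m > 0" using assms(3) by simp
  obtain l where l1: "l \<ge> 1" and V0: "Vt ?a l T 0 \<noteq> 0"
    using exists_l_nonzero[OF ra m0 T(2)] by blast
  have l: "l > 0" using l1 by simp
  define \<kappa> where "\<kappa> = (2 * pi) powr (- real ?d / 2) * l ^ ?d"
  have \<kappa>: "\<kappa> > 0" unfolding \<kappa>_def using l by simp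
  have SG: "S t (gauss l y) x = complex_of_real \<kappa> * Vt ?a l t (x - y)" if "t \<ge> 0" for t y x
    unfolding \<kappa>_def by (rule S_gauss[OF assms(5) that l])
  have inLp: "in_Lp p (gauss l y)" for y by (rule in_Lp_gauss[OF l p(1)])
  have SinLp: "in_Lp p (S t (gauss l y))" if "t \<ge> 0" for t y
    using assms(5) that inLp unfolding is_elliptic_semigroup_def by blast
  obtain \<Lambda> where \<Lambda>: "\<Lambda> \<ge> 0" "\<And>w. cmod (Vt ?a l T w - Vt ?a l T 0) \<le> \<Lambda> * norm w"
    using Vt_lip[OF pa ra l T(2)] by blast
  define c0 where "c0 = cmod (Vt ?a l T 0)"
  have c0: "c0 > 0" using V0 by (simp add: c0_def)
  define \<delta> where "\<delta> = c0 / (2 * (\<Lambda> + 1))"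
  have \<delta>: "\<delta> > 0" using c0 \<Lambda> by (simp add: \<delta>_def)
  have near: "c0 / 2 \<le> cmod (Vt ?a l T w)" if "norm w < \<delta>" for w
  proof -
    have "\<Lambda> * norm w \<le> \<Lambda> * \<delta>" using that \<Lambda>(1) by (simp add: mult_left_mono)
    also have "\<Lambda> * \<delta> \<le> c0 / 2"
    proof -
      have "\<Lambda> * \<delta> = c0 / 2 * (\<Lambda> / (\<Lambda> + 1))" using \<Lambda>(1) by (simp add: \<delta>_def field_simps)
      also have "\<dots> \<le> c0 / 2 * 1" using \<Lambda>(1) c0 by (intro mult_left_mono) auto
      finally show ?thesis by simp
    qed
    finally have "\<Lambda> * norm w \<le> c0 / 2" .
    moreover have "c0 \<le> cmod (Vt ?a l T w) + cmod (Vt ?a l T w - Vt ?a l T 0)"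
      unfolding c0_def by (metis norm_triangle_sub add.commute norm_minus_commute)
    ultimately show ?thesis using \<Lambda>(2)[of w] by linarith
  qed
  define lam0 where "lam0 = ((\<kappa> * (c0 / 2)) powr p * (unit_ball_vol (real ?d) * \<delta> ^ ?d)) powr (1 / p)"
  have ubv: "unit_ball_vol (real ?d) > 0" by (rule unit_ball_vol_pos) simp
  have ubv': "unit_ball_vol (real ?d) \<noteq> 0" using ubv by linarith
  have lam0: "lam0 > 0" unfolding lam0_def using \<kappa> c0 \<delta> ubv ubv' by (simp add: mult_pos_pos)
  have LHS: "lam0 \<le> Lp_norm p (S T (gauss l y))" for y
    unfolding lam0_def
  proof (rule lhs_lower[OF _ p(1) \<delta>])
    show "integrable lebesgue (\<lambda>x. cmod (S T (gauss l y) x) powr p)"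
      using SinLp[OF T(2), of y] unfolding in_Lp_def by blast
    show "0 \<le> \<kappa> * (c0 / 2)" using \<kappa> c0 by simp
    fix x :: "real^'n"
    assume "norm (x - y) < \<delta>"
    then have "c0 / 2 \<le> cmod (Vt ?a l T (x - y))" by (rule near)
    then show "\<kappa> * (c0 / 2) \<le> cmod (S T (gauss l y) x)"
      unfolding SG[OF T(2)] using \<kappa> by (simp add: norm_mult mult_left_mono)
  qed
  obtain K where K: "\<And>t w. 0 \<le> t \<Longrightarrow> t \<le> T \<Longrightarrow> cmod (Vt ?a l t w) \<le> K * (\<Prod>b\<in>Basis. om (w \<bullet> b))"
    using Vt_prod_bound[OF pa ra l T(2)] by blast
  define K' where "K' = max K 0"
  have K': "K' \<ge> 0" "\<And>t w. 0 \<le> t \<Longrightarrow> t \<le> T \<Longrightarrow> cmod (Vt ?a l t w) \<le> K' * (\<Prod>b\<in>Basis. om (w \<bullet> b))"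
  proof -
    show "K' \<ge> 0" by (simp add: K'_def)
    fix t and w :: "real^'n" assume "0 \<le> t" "t \<le> T"
    have "K * (\<Prod>b\<in>Basis. om (w \<bullet> b)) \<le> K' * (\<Prod>b\<in>Basis. om (w \<bullet> b))"
      by (intro mult_right_mono) (auto simp: K'_def intro!: prod_nonneg simp: om_pos less_imp_le)
    then show "cmod (Vt ?a l t w) \<le> K' * (\<Prod>b\<in>Basis. om (w \<bullet> b))" using K[OF \<open>0 \<le> t\<close> \<open>t \<le> T\<close>, of w] by linarith
  qed
  define \<Gamma>0 where "\<Gamma>0 = (\<integral>\<xi>. cmod (gauss (1 / l) (0::real^'n) \<xi>) \<partial>lborel)"
  have \<Gamma>0: "\<Gamma>0 \<ge> 0" unfolding \<Gamma>0_def by simp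
  have VB0: "cmod (Vt ?a l t w) \<le> \<Gamma>0" if "t \<ge> 0" for t w
    unfolding \<Gamma>0_def by (rule Vt_bound0[OF pa ra that l])
  define A1 where "A1 = (\<kappa> * \<Gamma>0) powr p"
  define A2 where "A2 = (\<kappa> * K') powr p"
  have A1: "A1 \<ge> 0" and A2: "A2 \<ge> 0" by (simp_all add: A1_def A2_def)
  define CM where "CM = C_obs * max 1 T"
  have CM: "CM > 0" using assms(8) by (simp add: CM_def)
  define \<gamma> where "\<gamma> = (lam0 / CM) powr p"
  have \<gamma>: "\<gamma> > 0" using lam0 CM by (simp add: \<gamma>_def)
  define Q where "Q = A2 * (real ?d * 2 * 4 ^ (?d - 1))"
  have Q: "Q \<ge> 0" using A2 by (simp add: Q_def)
  define R0 where "R0 = max 1 (2 * Q / \<gamma> + 1)"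
  have R0: "R0 \<ge> 1" "R0 \<ge> 2 * Q / \<gamma> + 1" by (auto simp: R0_def)
  have tailsmall: "A2 * (real DIM(real^'n) * (2 / R0) * 4 ^ (DIM(real^'n) - 1)) < \<gamma> / 2"
  proof -
    have "A2 * (real DIM(real^'n) * (2 / R0) * 4 ^ (DIM(real^'n) - 1)) = Q / R0" by (simp add: Q_def field_simps)
    also have "Q / R0 \<le> Q / (2 * Q / \<gamma> + 1)"
    proof (rule divide_left_mono)
      have "0 \<le> 2 * Q / \<gamma>" using Q \<gamma> by simp
      then show "0 < R0 * (2 * Q / \<gamma> + 1)" using R0 by (intro mult_pos_pos) auto
    qed (use R0 Q in auto)
    also have "Q / (2 * Q / \<gamma> + 1) = Q * \<gamma> / (2 * Q + \<gamma>)" using \<gamma> by (simp add: field_simps)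
    also have "\<dots> < \<gamma> / 2"
      using \<gamma> Q by (simp add: field_simps)
    finally show ?thesis .
  qed
  define ell where "ell = 2 * R0"
  have ell: "ell > 0" using R0 by (simp add: ell_def)
  define \<rho> where "\<rho> = min (1/2) (\<gamma> / (2 * (A1 * ell ^ ?d + 1)))"
  have den: "2 * (A1 * ell ^ ?d + 1) > 0" using A1 ell by (simp add: add_nonneg_pos)
  have \<rho>: "0 < \<rho>" "\<rho> < 1" using \<gamma> den by (auto simp: \<rho>_def)
  have \<rho>small: "A1 * (\<rho> * ell ^ ?d) \<le> \<gamma> / 2"
  proof -
    have "A1 * (\<rho> * ell ^ ?d) \<le> A1 * (\<gamma> / (2 * (A1 * ell ^ ?d + 1)) * ell ^ ?d)"
      using A1 ell by (intro mult_left_mono mult_right_mono) (auto simp: \<rho>_def)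
    also have "\<dots> = (\<gamma> / 2) * (A1 * ell ^ ?d / (A1 * ell ^ ?d + 1))"
      using A1 ell by (simp add: field_simps)
    also have "\<dots> \<le> (\<gamma> / 2) * 1"
    proof (intro mult_left_mono)
      have "0 \<le> A1 * ell ^ ?d" using A1 ell by simp
      then show "A1 * ell ^ ?d / (A1 * ell ^ ?d + 1) \<le> 1" by (simp add: divide_le_eq)
    qed (use \<gamma> in auto)
    finally show ?thesis by simp
  qed
  define L :: "real^'n" where "L = (\<chi> i. ell)"
  have L: "\<forall>i. 0 < L $ i" using ell by (simp add: L_def)
  obtain x0 where x0: "measure lebesgue (E \<inter> box x0 (x0 + L)) < \<rho> * (\<Prod>i\<in>UNIV. L $ i)"
  proof -
    have "\<not> (\<forall>x. measure lebesgue (E \<inter> box x (x + L)) \<ge> \<rho> * (\<Prod>i\<in>UNIV. L $ i))"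
      using nt assms(6) \<rho> L unfolding thick_def by blast
    then show ?thesis using that by (auto simp: not_le)
  qed
  have prodL: "(\<Prod>i\<in>UNIV. L $ i) = ell ^ ?d" by (simp add: L_def)
  define v :: "real^'n" where "v = (\<chi> i. R0)"
  define y where "y = x0 + v"
  have vb: "v \<bullet> b = R0" if "b \<in> Basis" for b using that by (auto simp: v_def Basis_vec_def inner_axis)
  have boxeq: "box (y - v) (y + v) = box x0 (x0 + L)"
  proof -
    have "y + v = x0 + L" by (simp add: y_def v_def L_def ell_def vec_eq_iff)
    moreover have "y - v = x0" by (simp add: y_def)
    ultimately show ?thesis by simp
  qed
  define \<beta> where "\<beta> = A1 * (\<rho> * ell ^ ?d) + A2 * (real DIM(real^'n) * (2 / R0) * 4 ^ (DIM(real^'n) - 1))"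
  have \<beta>: "\<beta> \<ge> 0" "\<beta> < \<gamma>" using A1 A2 \<rho> ell R0 \<rho>small tailsmall by (auto simp: \<beta>_def)
  have gbound: "0 \<le> Lp_norm_on p E (S t (gauss l y)) \<and> Lp_norm_on p E (S t (gauss l y)) \<le> \<beta> powr (1 / p)"
    if "t \<in> {0<..<T}" for t
  proof -
    have t: "0 \<le> t" "t \<le> T" using that by auto
    have "(\<integral>x\<in>E. cmod (S t (gauss l y) x) powr p \<partial>lebesgue) \<le>
       (\<kappa> * \<Gamma>0) powr p * measure lebesgue (E \<inter> box (y - v) (y + v)) + (\<kappa> * K') powr p * (real DIM(real^'n) * (2 / R0) * 4 ^ (DIM(real^'n) - 1))"
    proof (rule E_bound[OF assms(6) p(2) vb R0(1)])
      show "0 \<le> \<kappa> * \<Gamma>0" using \<kappa> \<Gamma>0 by simp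
      show "0 \<le> \<kappa> * K'" using \<kappa> K' by simp
      fix x :: "real^'n"
      show "cmod (S t (gauss l y) x) \<le> \<kappa> * \<Gamma>0"
        unfolding SG[OF t(1)] using VB0[OF t(1)] \<kappa> by (simp add: norm_mult mult_left_mono)
      show "cmod (S t (gauss l y) x) \<le> \<kappa> * K' * (\<Prod>b\<in>Basis. om ((x - y) \<bullet> b))"
        unfolding SG[OF t(1)] using K'(2)[OF t, of "x - y"] \<kappa> by (simp add: norm_mult mult.assoc mult_left_mono)
    qed
    also have "\<dots> \<le> \<beta>"
    proof -
      have "measure lebesgue (E \<inter> box (y - v) (y + v)) \<le> \<rho> * ell ^ ?d"
        using x0 boxeq prodL by simp
      then have "A1 * measure lebesgue (E \<inter> box (y - v) (y + v)) \<le> A1 * (\<rho> * ell ^ ?d)"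
        using A1 by (rule mult_left_mono)
      then show ?thesis by (simp add: \<beta>_def A1_def A2_def)
    qed
    finally have I: "(\<integral>x\<in>E. cmod (S t (gauss l y) x) powr p \<partial>lebesgue) \<le> \<beta>" .
    have I0: "0 \<le> (\<integral>x\<in>E. cmod (S t (gauss l y) x) powr p \<partial>lebesgue)"
      unfolding set_lebesgue_integral_def by (intro integral_nonneg_AE AE_I2) (auto simp: indicator_def)
    show ?thesis unfolding Lp_norm_on_def using I I0 p by (auto intro!: powr_mono2)
  qed
  have "Lr_time_norm r T (\<lambda>t. Lp_norm_on p E (S t (gauss l y))) \<le> max 1 T * \<beta> powr (1 / p)"
    by (rule Lr_bound[OF assms(2) T(1)]) (use gbound in auto)
  then have "Lp_norm p (S T (gauss l y)) \<le> C_obs * (max 1 T * \<beta> powr (1 / p))"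
    using assms(9) inLp[of y] assms(8) by (meson mult_left_mono less_imp_le order_trans)
  also have "\<dots> = CM * \<beta> powr (1 / p)" by (simp add: CM_def)
  also have "\<dots> < CM * \<gamma> powr (1 / p)"
    using CM \<beta> p by (intro mult_strict_left_mono powr_less_mono2) auto
  also have "\<gamma> powr (1 / p) = lam0 / CM"
    using lam0 CM p by (simp add: \<gamma>_def powr_powr)
  also have "CM * (lam0 / CM) = lam0" using CM by simp
  finally show False using LHS[of y] by simp
qed

end
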